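(* Let $n,m\ge 1$, let $R\in\mathbb{R}^{2n\times 2n}$ be symmetric, $C\in\mathbb{R}^{2m\times 2n}$, $\Sigma\in\mathbb{R}^{2m\times 2m}$ real symplectic, and consider the linear system with $A=\mathbb{J}_{2n}R-\tfrac12 C^{\sharp}C$, $B=-C^{\sharp}\Sigma$, output matrix $C$, $D=\Sigma$ (state $x\in\mathbb{R}^{2n}$). Let $\tilde{\mathcal{O}}=\begin{pmatrix}C\\ C(\mathbb{J}_{2n}R)\\ \vdots\\ C(\mathbb{J}_{2n}R)^{2n-1}\end{pmatrix}\in\mathbb{R}^{4nm\times 2n}$, and let $\tilde{\mathcal{O}}=QEZ^{-1}$ be a factorization with $Q\in\mathbb{R}^{4nm\times 4nm}$ orthogonal, $Z\in\mathbb{R}^{2n\times 2n}$ real symplectic, and $$E=\begin{pmatrix}\Xi_k&0&0&0&0&0\\ 0&I_l&0&0&0&0\\ 0&0&0&\Xi_k&0&0\\ 0&0&0&0&0&0\end{pmatrix}\in\mathbb{R}^{4nm\times 2n},$$ with column blocks of widths $k,l,n-k-l,k,l,n-k-l$, row blocks of heights $k,l,k,4nm-2k-l$, and $\Xi_k=\operatorname{diag}(\xi_1,\dots,\xi_k)$ with all $\xi_i>0$; and let $V=Z^{-1}$ (this $V$ is real symplectic and puts the system in the Kalman-like canonical form described below, with these integers $k,l$). Let $X\in\mathbb{R}^{4nm\times 4nm}$ be invertible and $Y\in\mathbb{R}^{2n\times 2n}$ real symplectic such that $$XEY=\begin{pmatrix}\Xi'_k&0&0&0&0&0\\ 0&\Xi'_l&0&0&0&0\\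 0&0&0&\Xi''_k&0&0\\ 0&0&0&0&0&0\end{pmatrix}$$ (same block sizes as $E$), where $\Xi'_k,\Xi''_k\in\mathbb{R}^{k\times k}$ and $\Xi'_l\in\mathbb{R}^{l\times l}$ are diagonal with all diagonal entries nonzero. Then $V'=Y^{-1}V$ also puts the system in the Kalman-like canonical form, i.e. $V'$ is real symplectic and, writing $\hat x=V'x=(\hat q_a,\hat q_b,\hat q_c,\hat p_a,\hat p_b,\hat p_c)$ with blocks of sizes $k,l,n-k-l,k,l,n-k-l$: the entries of $\hat q_a,\hat p_a$ are controllable and observable; the entries of $\hat p_b$ are controllable but unobservable; the entries of $\hat q_b$ are uncontrollable but observable; the entries of $\hat q_c,\hat p_c$ are uncontrollable and unobservable; and $\hat A=V'AV'^{-1}$, $\hat B=V'B$, $\hat C=CV'^{-1}$ have, with respect to this block partition, the form $$\hat A=\begin{pmatrix} * & * & 0 & * & 0 & 0\\ 0 & * & 0 & 0 & 0 & 0\\ 0 & * & * & 0 & 0 & *\\ * & * & 0 & * & 0 & 0\\ * & * & * & * & * & *\\ 0 & * & * & 0 & 0 & * \end{pmatrix},\quad \hat B=\begin{pmatrix}*\\0\\0\\ *\\ *\\0\end{pmatrix},\quad \hat C=\begin{pmatrix}* & * & 0 & * & 0 & 0\end{pmatrix},$$ where $*$ denotes blocks that are arbitrary real matrices of compatible sizes.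
   Context: $\mathbb{J}_{2k}=\begin{pmatrix}0_{k\times k}& I_k\\ -I_k & 0_{k\times k}\end{pmatrix}$. For a real $2r\times 2s$ matrix $X$, $X^{\sharp}=-\mathbb{J}_{2s}X^{\top}\mathbb{J}_{2r}$. A real $2k\times 2k$ matrix $T$ is symplectic if $TT^{\sharp}=T^{\sharp}T=I_{2k}$, equivalently $T^{\top}\mathbb{J}_{2k}T=\mathbb{J}_{2k}$. (A factorization $\tilde{\mathcal{O}}=QEZ^{-1}$ of the stated type always exists.) For a linear system with matrices $(A,B,C)$ and $2n$-dimensional state, the controllability matrix is $\mathcal{C}=(B\;AB\;\cdots\;A^{2n-1}B)$ and the observability matrix is $\mathcal{O}=(C^{\top}\;(CA)^{\top}\;\cdots\;(CA^{2n-1})^{\top})^{\top}$; the controllable subspace is $\operatorname{Im}\mathcal{C}$, the unobservable subspace is $\operatorname{Ker}\mathcal{O}$, the uncontrollable subspace is the orthogonal complement of $\operatorname{Im}\mathcal{C}$ in $\mathbb{R}^{2n}$, and the observable subspace is the orthogonal complement of $\operatorname{Ker}\mathcal{O}$. For the transformed system $(\hat A,\hat B,\hat C)$, the $i$-th transformed coordinate is called controllable (resp. uncontrollable, observable, unobservable) if the standard basis vector $e_i$ lies in the corresponding subspace of the transformed system. *)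

theory Defs
  imports "Jordan_Normal_Form.Matrix"
begin

definition Jmat :: "nat \<Rightarrow> real mat" where
  "Jmat k = four_block_mat (0\<^sub>m k k) (1\<^sub>m k) (- 1\<^sub>m k) (0\<^sub>m k k)"

definition sharp :: "real mat \<Rightarrow> real mat" where
  "sharp X = - (Jmat (dim_col X div 2) * transpose_mat X * Jmat (dim_row X div 2))"

definition symplectic :: "nat \<Rightarrow> real mat \<Rightarrow> bool" where
  "symplectic k T \<longleftrightarrow> T \<in> carrier_mat (2*k) (2*k) \<and>
     T * sharp T = 1\<^sub>m (2*k) \<and> sharp T * T = 1\<^sub>m (2*k)"

definition minv :: "real mat \<Rightarrow> real mat" where
  "minv A = (SOME B. B \<in> carrier_mat (dim_row A) (dim_row A) \<and>
       A * B = 1\<^sub>m (dim_row A) \<and> B * A = 1\<^sub>m (dim_row A))"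

definition ctrb_mat :: "real mat \<Rightarrow> real mat \<Rightarrow> nat \<Rightarrow> real mat" where
  "ctrb_mat A B N = mat (dim_row B) (N * dim_col B)
     (\<lambda>(i,j). ((A ^\<^sub>m (j div dim_col B)) * B) $$ (i, j mod dim_col B))"

definition obsv_mat :: "real mat \<Rightarrow> real mat \<Rightarrow> nat \<Rightarrow> real mat" where
  "obsv_mat C M N = mat (N * dim_row C) (dim_col C)
     (\<lambda>(i,j). (C * (M ^\<^sub>m (i div dim_row C))) $$ (i mod dim_row C, j))"

definition mat_image :: "real mat \<Rightarrow> real vec set" where
  "mat_image M = {M *\<^sub>v u | u. u \<in> carrier_vec (dim_col M)}"

definition mat_ker :: "real mat \<Rightarrow> real vec set" where
  "mat_ker M = {x \<in> carrier_vec (dim_col M). M *\<^sub>v x = 0\<^sub>v (dim_row M)}"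

definition orth_compl :: "nat \<Rightarrow> real vec set \<Rightarrow> real vec set" where
  "orth_compl N S = {x \<in> carrier_vec N. \<forall>y\<in>S. x \<bullet> y = 0}"

definition controllable_sub :: "nat \<Rightarrow> real mat \<Rightarrow> real mat \<Rightarrow> real vec set" where
  "controllable_sub N A B = mat_image (ctrb_mat A B N)"
definition uncontrollable_sub :: "nat \<Rightarrow> real mat \<Rightarrow> real mat \<Rightarrow> real vec set" where
  "uncontrollable_sub N A B = orth_compl N (controllable_sub N A B)"
definition unobservable_sub :: "nat \<Rightarrow> real mat \<Rightarrow> real mat \<Rightarrow> real vec set" where
  "unobservable_sub N A C = mat_ker (obsv_mat C A N)"
definition observable_sub :: "nat \<Rightarrow> real mat \<Rightarrow> real mat \<Rightarrow> real vec set" where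
  "observable_sub N A C = orth_compl N (unobservable_sub N A C)"

text \<open>Block index (0..5) of coordinate i < 2n for the partition with block sizes
  k, l, n-k-l, k, l, n-k-l (blocks q_a, q_b, q_c, p_a, p_b, p_c).\<close>
definition blk :: "nat \<Rightarrow> nat \<Rightarrow> nat \<Rightarrow> nat \<Rightarrow> nat" where
  "blk n k l i = (let h = (if i < n then 0 else 3); r = (if i < n then i else i - n) in
      h + (if r < k then 0 else if r < k + l then 1 else 2))"

definition Ahat_zero :: "nat \<Rightarrow> nat \<Rightarrow> bool" where
  "Ahat_zero r c \<longleftrightarrow>
     (r = 0 \<and> c \<in> {2,4,5}) \<or> (r = 1 \<and> c \<in> {0,2,3,4,5}) \<or> (r = 2 \<and> c \<in> {0,3,4}) \<or>
     (r = 3 \<and> c \<in> {2,4,5}) \<or> (r = 5 \<and> c \<in> {0,3,4})"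

definition Bhat_zero :: "nat \<Rightarrow> bool" where
  "Bhat_zero r \<longleftrightarrow> r \<in> {1,2,5}"

definition Chat_zero :: "nat \<Rightarrow> bool" where
  "Chat_zero c \<longleftrightarrow> c \<in> {2,4,5}"

text \<open>A 4nm x 2n (here: Nr x 2n) matrix with block structure
  [D1 0 0 0 0 0; 0 D2 0 0 0 0; 0 0 0 D3 0 0; 0 0 0 0 0 0]
  with column blocks k,l,n-k-l,k,l,n-k-l and row blocks k,l,k,rest,
  where D1 = diag d1 (k x k), D2 = diag d2 (l x l), D3 = diag d3 (k x k).\<close>
definition blockE :: "nat \<Rightarrow> nat \<Rightarrow> nat \<Rightarrow> nat \<Rightarrow> (nat \<Rightarrow> real) \<Rightarrow> (nat \<Rightarrow> real)
     \<Rightarrow> (nat \<Rightarrow> real) \<Rightarrow> real mat" where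
  "blockE Nr n k l d1 d2 d3 = mat Nr (2*n) (\<lambda>(i,j).
     if i < k \<and> j = i then d1 i
     else if k \<le> i \<and> i < k + l \<and> j = i then d2 (i - k)
     else if k + l \<le> i \<and> i < 2*k + l \<and> j = n + (i - (k + l)) then d3 (i - (k + l))
     else 0)"

definition kalman_like_form ::
  "nat \<Rightarrow> nat \<Rightarrow> nat \<Rightarrow> real mat \<Rightarrow> real mat \<Rightarrow> real mat \<Rightarrow> real mat \<Rightarrow> bool" where
  "kalman_like_form n k l A B C V \<longleftrightarrow>
     (let Ah = V * A * minv V; Bh = V * B; Ch = C * minv V; N = 2*n in
     symplectic n V \<and>
     (\<forall>i<N. blk n k l i \<in> {0,3} \<longrightarrow>
         unit_vec N i \<in> controllable_sub N Ah Bh \<and> unit_vec N i \<in> observable_sub N Ah Ch) \<and>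
     (\<forall>i<N. blk n k l i = 4 \<longrightarrow>
         unit_vec N i \<in> controllable_sub N Ah Bh \<and> unit_vec N i \<in> unobservable_sub N Ah Ch) \<and>
     (\<forall>i<N. blk n k l i = 1 \<longrightarrow>
         unit_vec N i \<in> uncontrollable_sub N Ah Bh \<and> unit_vec N i \<in> observable_sub N Ah Ch) \<and>
     (\<forall>i<N. blk n k l i \<in> {2,5} \<longrightarrow>
         unit_vec N i \<in> uncontrollable_sub N Ah Bh \<and> unit_vec N i \<in> unobservable_sub N Ah Ch) \<and>
     (\<forall>i<N. \<forall>j<N. Ahat_zero (blk n k l i) (blk n k l j) \<longrightarrow> Ah $$ (i,j) = 0) \<and>
     (\<forall>i<N. \<forall>j<dim_col B. Bhat_zero (blk n k l i) \<longrightarrow> Bh $$ (i,j) = 0) \<and>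
     (\<forall>i<dim_row C. \<forall>j<N. Chat_zero (blk n k l j) \<longrightarrow> Ch $$ (i,j) = 0))"

end

theory Submission
  imports Defs "Jordan_Normal_Form.VS_Connect"
begin

lemma Jmat_carrier[simp]: "Jmat n \<in> carrier_mat (2*n) (2*n)"
  using four_block_carrier_mat[of "0\<^sub>m n n" n n "0\<^sub>m n n" n n "1\<^sub>m n" "- 1\<^sub>m n"] unfolding Jmat_def mult_2 by auto

lemma Jmat_dims[simp]: "dim_row (Jmat n) = 2*n" "dim_col (Jmat n) = 2*n"
  using Jmat_carrier[of n] unfolding carrier_mat_def by auto

lemma mult_index:
  assumes "A \<in> carrier_mat a b" "B \<in> carrier_mat b c" "i < a" "j < c"
  shows "(A*B)$$(i,j) = (\<Sum>t<b. A$$(i,t)*B$$(t,j))"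
  using assms by (auto simp: scalar_prod_def lessThan_atLeast0 intro!: sum.cong)

lemma Jmat_index: "i < 2*n \<Longrightarrow> j < 2*n \<Longrightarrow> Jmat n $$ (i,j) =
  (if i < n \<and> j = i + n then 1 else if n \<le> i \<and> j = i - n then -1 else 0)"
  unfolding Jmat_def by (auto simp: index_mat_four_block)

lemma J_mult_index:
  assumes M: "M \<in> carrier_mat (2*n) c" and i: "i < 2*n" and j: "j < c"
  shows "(Jmat n * M) $$ (i,j) = (if i < n then M $$ (i+n, j) else - M $$ (i-n, j))"
proof -
  have "(Jmat n * M) $$ (i,j) = (\<Sum>t<2*n. Jmat n $$ (i,t) * M $$ (t,j))"
    using M i j by (intro mult_index) auto
  also have "\<dots> = (\<Sum>t<2*n. if t = (if i < n then i + n else i - n) then (if i<n then M $$ (t,j) else - M $$ (t,j)) else 0)"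
    using i by (intro sum.cong) (auto simp: Jmat_index)
  also have "\<dots> = (if i < n then M $$ (i+n, j) else - M $$ (i-n, j))"
    using i by (subst sum.delta) auto
  finally show ?thesis .
qed

lemma mult_J_index:
  assumes M: "M \<in> carrier_mat r (2*n)" and i: "i < r" and j: "j < 2*n"
  shows "(M * Jmat n) $$ (i,j) = (if j < n then - M $$ (i, j+n) else M $$ (i, j-n))"
proof -
  have "(M * Jmat n) $$ (i,j) = (\<Sum>t<2*n. M $$ (i,t) * Jmat n $$ (t,j))"
    using M i j by (intro mult_index) auto
  also have "\<dots> = (\<Sum>t<2*n. if t = (if j < n then j + n else j - n) then (if j<n then - M $$ (i,t) else M $$ (i,t)) else 0)"
    using j by (intro sum.cong) (auto simp: Jmat_index)
  also have "\<dots> = (if j < n then - M $$ (i, j+n) else M $$ (i, j-n))"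
    using j by (subst sum.delta) auto
  finally show ?thesis .
qed

lemma JJ: "Jmat n * Jmat n = - 1\<^sub>m (2*n)"
  by (rule eq_matI) (auto simp del: index_mult_mat(1) simp: J_mult_index[OF Jmat_carrier] Jmat_index)

declare assoc_mult_mat[simp del]

lemma assoc_d: "dim_col A = dim_row B \<Longrightarrow> dim_col B = dim_row C \<Longrightarrow> A * B * C = A * (B * C)"
  by (metis assoc_mult_mat carrier_matI)

lemma assoc4: "dim_col A = dim_row B \<Longrightarrow> dim_col B = dim_row C \<Longrightarrow> dim_col C = dim_row D \<Longrightarrow>
   (A * B) * (C * D) = A * ((B * C) * D)"
  by (simp add: assoc_d)

lemma sharp_eq: assumes "X \<in> carrier_mat (2*r) (2*s)" shows "sharp X = - (Jmat s * transpose_mat X * Jmat r)"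
proof -
  have "dim_col X div 2 = s" "dim_row X div 2 = r" using assms by auto
  then show ?thesis unfolding sharp_def by metis
qed

lemma sharp_carrier[simp]: "X \<in> carrier_mat (2*r) (2*s) \<Longrightarrow> sharp X \<in> carrier_mat (2*s) (2*r)"
  by (subst sharp_eq) (auto intro!: uminus_carrier_mat mult_carrier_mat)

lemma sharp_dims[simp]: "X \<in> carrier_mat (2*r) (2*s) \<Longrightarrow> dim_row (sharp X) = 2*s"
   "X \<in> carrier_mat (2*r) (2*s) \<Longrightarrow> dim_col (sharp X) = 2*r"
  using carrier_matD[OF sharp_carrier[of X r s]] by auto

lemma JJ': "dim_row A = 2*n \<Longrightarrow> Jmat n * (Jmat n * A) = - A"
  by (subst assoc_d[symmetric]) (auto simp: JJ)

lemma sharp_mult: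
  assumes X: "X \<in> carrier_mat (2*r) (2*s)" and Y: "Y \<in> carrier_mat (2*s) (2*t)"
  shows "sharp (X * Y) = sharp Y * sharp X"
proof -
  have XY: "X * Y \<in> carrier_mat (2*r) (2*t)" using X Y by auto
  have "sharp Y * sharp X = (Jmat t * transpose_mat Y * Jmat s) * (Jmat s * transpose_mat X * Jmat r)"
    using X Y by (simp add: sharp_eq)
  also have "\<dots> = Jmat t * (transpose_mat Y * (Jmat s * (Jmat s * (transpose_mat X * Jmat r))))"
    using X Y by (simp add: assoc_d)
  also have "\<dots> = - (Jmat t * (transpose_mat Y * (transpose_mat X * Jmat r)))"
    using X Y by (simp add: JJ')
  also have "\<dots> = sharp (X * Y)"
    using X Y by (simp add: sharp_eq[OF XY] transpose_mult[OF X Y] assoc_d)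
  finally show ?thesis by simp
qed


lemma transpose_J: "transpose_mat (Jmat n) = - Jmat n"
  by (rule eq_matI) (auto simp: Jmat_index)

lemma sharp_sharp:
  assumes X: "X \<in> carrier_mat (2*r) (2*s)"
  shows "sharp (sharp X) = X"
proof -
  have SX: "sharp X \<in> carrier_mat (2*s) (2*r)" using X by simp
  have JX: "Jmat s * transpose_mat X \<in> carrier_mat (2*s) (2*r)" using X by auto
  have "transpose_mat (Jmat s * transpose_mat X * Jmat r) = transpose_mat (Jmat r) * transpose_mat (Jmat s * transpose_mat X)"
    by (rule transpose_mult[OF JX Jmat_carrier])
  also have "\<dots> = transpose_mat (Jmat r) * (X * transpose_mat (Jmat s))"
    using X by (subst transpose_mult[of _ "2*s" "2*s"]) auto
  also have "\<dots> = Jmat r * X * Jmat s"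
    using X by (simp add: transpose_J assoc_d)
  finally have T: "transpose_mat (sharp X) = - (Jmat r * X * Jmat s)"
    using X by (simp add: sharp_eq transpose_uminus)
  have "sharp (sharp X) = Jmat r * (Jmat r * X * Jmat s) * Jmat s"
    using X by (simp add: sharp_eq[OF SX] T)
  also have "\<dots> = Jmat r * (Jmat r * (X * (Jmat s * Jmat s)))"
    using X by (simp add: assoc_d)
  also have "\<dots> = X" using X by (simp add: JJ' JJ)
  finally show ?thesis .
qed

lemma minv_unique:
  assumes A: "A \<in> carrier_mat d d" and B: "B \<in> carrier_mat d d" and AB: "A * B = 1\<^sub>m d" and BA: "B * A = 1\<^sub>m d"
  shows "minv A = B"
proof -
  let ?P = "\<lambda>B. B \<in> carrier_mat (dim_row A) (dim_row A) \<and> A * B = 1\<^sub>m (dim_row A) \<and> B * A = 1\<^sub>m (dim_row A)"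
  have "?P B" using A B AB BA by auto
  then have P: "?P (minv A)" unfolding minv_def by (rule someI)
  then have M: "minv A \<in> carrier_mat d d" "minv A * A = 1\<^sub>m d" using A by auto
  have "minv A = minv A * (A * B)" using AB M by simp
  also have "\<dots> = (minv A * A) * B" using M A B by (intro assoc_d[symmetric]) auto
  also have "\<dots> = B" using M B by simp
  finally show ?thesis .
qed

lemma minv_props:
  assumes A: "A \<in> carrier_mat d d" and inv: "invertible_mat A"
  shows "minv A \<in> carrier_mat d d" "A * minv A = 1\<^sub>m d" "minv A * A = 1\<^sub>m d"
proof -
  obtain B where "inverts_mat A B" "inverts_mat B A" using inv unfolding invertible_mat_def by auto
  then have AB: "A * B = 1\<^sub>m d" and BA: "B * A = 1\<^sub>m (dim_row B)" using A unfolding inverts_mat_def by auto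
  have "dim_col B = d" using AB A by (metis index_mult_mat(3) index_one_mat(3))
  moreover have "dim_row B = d" using BA A by (metis index_mult_mat(3) index_one_mat(3) carrier_matD(2))
  ultimately have B: "B \<in> carrier_mat d d" by auto
  have BA': "B * A = 1\<^sub>m d" using BA B by auto
  have "minv A = B" by (rule minv_unique[OF A B AB BA'])
  then show "minv A \<in> carrier_mat d d" "A * minv A = 1\<^sub>m d" "minv A * A = 1\<^sub>m d" using B AB BA' by auto
qed

lemma symplectic_minv: "symplectic n T \<Longrightarrow> minv T = sharp T"
  unfolding symplectic_def by (intro minv_unique[of _ "2*n"]) auto

lemma symp_prod:
  assumes Y: "symplectic n Y" and Z: "symplectic n Z"
  shows "minv Y * minv Z = sharp (Z * Y)" "symplectic n (minv Y * minv Z)"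
    "minv (minv Y * minv Z) = Z * Y"
    "(minv Y * minv Z) * (Z * Y) = 1\<^sub>m (2*n)" "(Z * Y) * (minv Y * minv Z) = 1\<^sub>m (2*n)"
proof -
  have Yc: "Y \<in> carrier_mat (2*n) (2*n)" and Zc: "Z \<in> carrier_mat (2*n) (2*n)"
    using Y Z unfolding symplectic_def by auto
  have sY: "sharp Y * Y = 1\<^sub>m (2*n)" "Y * sharp Y = 1\<^sub>m (2*n)"
   and sZ: "sharp Z * Z = 1\<^sub>m (2*n)" "Z * sharp Z = 1\<^sub>m (2*n)"
    using Y Z unfolding symplectic_def by auto
  have eq: "minv Y * minv Z = sharp (Z * Y)"
    using Y Z Yc Zc by (simp add: symplectic_minv sharp_mult)
  show "minv Y * minv Z = sharp (Z * Y)" by (rule eq)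
  have c1: "sharp Y \<in> carrier_mat (2*n) (2*n)" "sharp Z \<in> carrier_mat (2*n) (2*n)" using Yc Zc by auto
  have VW: "(sharp Y * sharp Z) * (Z * Y) = 1\<^sub>m (2*n)"
  proof -
    have "(sharp Y * sharp Z) * (Z * Y) = sharp Y * ((sharp Z * Z) * Y)"
      using c1 Yc Zc by (intro assoc4) auto
    also have "\<dots> = 1\<^sub>m (2*n)" using sZ sY Yc by simp
    finally show ?thesis .
  qed
  have WV: "(Z * Y) * (sharp Y * sharp Z) = 1\<^sub>m (2*n)"
  proof -
    have "(Z * Y) * (sharp Y * sharp Z) = Z * ((Y * sharp Y) * sharp Z)"
      using c1 Yc Zc by (intro assoc4) auto
    also have "\<dots> = 1\<^sub>m (2*n)" using sZ sY c1 by simp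
    finally show ?thesis .
  qed
  have eq2: "minv Y * minv Z = sharp Y * sharp Z" using Y Z by (simp add: symplectic_minv)
  show "(minv Y * minv Z) * (Z * Y) = 1\<^sub>m (2*n)" "(Z * Y) * (minv Y * minv Z) = 1\<^sub>m (2*n)"
    using VW WV eq2 by auto
  have ZY: "Z * Y \<in> carrier_mat (2*n) (2*n)" using Yc Zc by auto
  have sV: "sharp (minv Y * minv Z) = Z * Y" using eq sharp_sharp[OF ZY] by simp
  show "symplectic n (minv Y * minv Z)"
    unfolding symplectic_def sV using VW WV eq2 c1 by auto
  show "minv (minv Y * minv Z) = Z * Y"
    using VW WV eq2 c1 ZY by (auto intro!: minv_unique[of _ "2*n"])
qed

lemma sum_div_mod:
  fixes g :: "nat \<Rightarrow> nat \<Rightarrow> 'a::comm_monoid_add"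
  shows "(\<Sum>c<N*p. g (c div p) (c mod p)) = (\<Sum>j<N. \<Sum>r<p. g j r)"
proof -
  have "(\<Sum>c<N*p. g (c div p) (c mod p)) = (\<Sum>(j,r)\<in>{..<N}\<times>{..<p}. g j r)"
  proof (rule sum.reindex_bij_witness[where i="\<lambda>(j,r). j*p+r" and j="\<lambda>c. (c div p, c mod p)"])
    fix c assume c: "c \<in> {..<N*p}"
    then have p: "p > 0" by (cases p) auto
    show "(case (c div p, c mod p) of (j, r) \<Rightarrow> j * p + r) = c" by simp
    show "(c div p, c mod p) \<in> {..<N} \<times> {..<p}" using c p by (auto simp: less_mult_imp_div_less)
    show "(case (c div p, c mod p) of (j, r) \<Rightarrow> g j r) = g (c div p) (c mod p)" by simp
  next
    fix a assume a: "a \<in> {..<N} \<times> {..<p}"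
    obtain j r where a': "a = (j,r)" by force
    with a have j: "j < N" and r: "r < p" by auto
    have "j*p + r < N*p"
    proof -
      have "j*p + r < j*p + p" using r by simp
      also have "\<dots> = Suc j * p" by simp
      also have "\<dots> \<le> N * p" using j by (intro mult_right_mono) auto
      finally show ?thesis .
    qed
    then show "(case a of (j, r) \<Rightarrow> j * p + r) \<in> {..<N*p}" using a' by simp
    show "((case a of (j, r) \<Rightarrow> j * p + r) div p, (case a of (j, r) \<Rightarrow> j * p + r) mod p) = a"
      using a' r by simp
  qed
  also have "\<dots> = (\<Sum>j<N. \<Sum>r<p. g j r)" by (rule sum.cartesian_product[symmetric])
  finally show ?thesis .
qed

lemma blk_shift_up: "i < n \<Longrightarrow> blk n k l (i+n) = blk n k l i + 3"
  unfolding blk_def Let_def by auto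
lemma blk_shift_down: "n \<le> i \<Longrightarrow> i < 2*n \<Longrightarrow> blk n k l (i-n) + 3 = blk n k l i"
  unfolding blk_def Let_def by auto


lemma blockE_mult_vec:
  assumes x: "x \<in> carrier_vec (2*n)" and r: "r < Nr" and kl: "k + l \<le> n"
  shows "(blockE Nr n k l a b c *\<^sub>v x) $ r =
    (if r < k then a r * x$r else if r < k+l then b (r-k) * x$r
     else if r < 2*k+l then c (r-(k+l)) * x$(n+(r-(k+l))) else 0)"
proof -
  let ?E = "blockE Nr n k l a b c"
  let ?t = "if r < k+l then r else n + (r - (k+l))"
  let ?co = "if r < k then a r else if r < k+l then b (r-k) else if r < 2*k+l then c (r-(k+l)) else 0"
  have "(?E *\<^sub>v x) $ r = (\<Sum>j<2*n. ?E $$ (r,j) * x$j)"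
    using x r by (auto simp: blockE_def scalar_prod_def lessThan_atLeast0 intro!: sum.cong)
  also have "\<dots> = (\<Sum>j<2*n. if j = ?t then ?co * x$j else 0)"
    using r kl by (intro sum.cong refl) (auto simp: blockE_def)
  also have "\<dots> = (if ?t < 2*n then ?co * x$?t else 0)"
    by (subst sum.delta) auto
  also have "\<dots> = (if r < k then a r * x$r else if r < k+l then b (r-k) * x$r
     else if r < 2*k+l then c (r-(k+l)) * x$(n+(r-(k+l))) else 0)"
    using kl by auto
  finally show ?thesis .
qed

lemma pow_mat_Suc': "M \<in> carrier_mat N N \<Longrightarrow> M ^\<^sub>m Suc i = M * M ^\<^sub>m i"
proof (induct i)
  case 0 then show ?case by simp
next
  case (Suc i)
  have "M ^\<^sub>m Suc (Suc i) = (M * M ^\<^sub>m i) * M" using Suc by simp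
  also have "\<dots> = M * (M ^\<^sub>m i * M)" using Suc by (intro assoc_mult_mat[of _ N N _ N _ N]) auto
  finally show ?case by simp
qed

lemma mult_zero_vec_right[simp]: "M \<in> carrier_mat r c \<Longrightarrow> M *\<^sub>v 0\<^sub>v c = 0\<^sub>v r"
  by (rule eq_vecI) (auto simp: scalar_prod_def)

lemma krylov:
  fixes M C :: "real mat"
  assumes M: "M \<in> carrier_mat N N" and C: "C \<in> carrier_mat p N" and x: "x \<in> carrier_vec N"
    and h: "\<forall>i<N. C *\<^sub>v (M ^\<^sub>m i *\<^sub>v x) = 0\<^sub>v p"
  shows "C *\<^sub>v (M ^\<^sub>m N *\<^sub>v x) = 0\<^sub>v p"
proof -
  interpret vec_space "TYPE(real)" N .
  define v where "v i = M ^\<^sub>m i *\<^sub>v x" for i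
  have vc: "v i \<in> carrier_vec N" for i using M x by (auto simp: v_def intro!: mult_mat_vec_carrier[of _ N N])
  have vS: "v ` I \<subseteq> carrier_vec N" for I using vc by auto
  have vSuc: "M *\<^sub>v v i = v (Suc i)" for i
    unfolding v_def pow_mat_Suc'[OF M] using M x by (simp add: assoc_mult_mat_vec[of _ N N _ N])
  have "\<exists>d\<le>N. v d \<in> span (v ` {..<d})"
  proof (rule ccontr)
    assume "\<not> ?thesis"
    then have nd: "\<And>d. d \<le> N \<Longrightarrow> v d \<notin> span (v ` {..<d})" by auto
    have "d \<le> Suc N \<Longrightarrow> lin_indpt (v ` {..<d}) \<and> card (v ` {..<d}) = d" for d
    proof (induct d)
      case 0 then show ?case by (auto simp: lin_dep_def)
    next
      case (Suc d)
      then have IH: "lin_indpt (v ` {..<d})" "card (v ` {..<d}) = d" and dN: "d \<le> N" by auto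
      have nsp: "v d \<notin> span (v ` {..<d})" using nd dN by auto
      have nin: "v d \<notin> v ` {..<d}" using nsp in_own_span[OF vS, of "{..<d}"] by blast
      have "\<not> lin_dep (v ` {..<d} \<union> {v d})"
        using lin_dep_iff_in_span[OF vS IH(1) vc nin] nsp by auto
      moreover have "v ` {..<Suc d} = v ` {..<d} \<union> {v d}" by (auto simp: lessThan_Suc)
      moreover have "card (v ` {..<d} \<union> {v d}) = Suc d" using IH nin by simp
      ultimately show ?case by simp
    qed
    from this[of "Suc N"] have "lin_indpt (v ` {..<Suc N})" "card (v ` {..<Suc N}) = Suc N" by auto
    with li_le_dim(2)[OF fin_dim vS, of "{..<Suc N}"] dim_is_n show False by linarith
  qed
  then obtain d where dN: "d \<le> N" and vd: "v d \<in> span (v ` {..<d})" by auto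
  define S where "S = v ` {..<d}"
  have Sc: "S \<subseteq> carrier_vec N" unfolding S_def using vS .
  have inv: "M *\<^sub>v y \<in> span S" if y: "y \<in> span S" for y
  proof -
    obtain a A where yA: "y = lincomb a A" "finite A" "A \<subseteq> S" using in_spanE[OF y] by auto
    have "A \<subseteq> S \<Longrightarrow> M *\<^sub>v lincomb a A \<in> span S" using yA(2)
    proof (induct A rule: finite_induct)
      case empty then show ?case using M span_zero by auto
    next
      case (insert u A)
      have uS: "u \<in> S" and AS: "A \<subseteq> S" using insert by auto
      then have Ac: "A \<subseteq> carrier_vec N" and uc: "u \<in> carrier_vec N" using Sc by auto
      have eq: "lincomb a (insert u A) = a u \<cdot>\<^sub>v u + lincomb a A"
        using lincomb_insert2[OF insert(1) Ac _ insert(2) uc] by auto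
      have lc: "lincomb a A \<in> carrier_vec N" using lincomb_closed[OF Ac] by auto
      have Mu: "M *\<^sub>v u \<in> span S"
      proof -
        obtain i where i: "i < d" "u = v i" using uS unfolding S_def by auto
        show ?thesis
        proof (cases "Suc i < d")
          case True then show ?thesis using i vSuc span_mem[OF Sc] unfolding S_def by auto
        next
          case False then have "Suc i = d" using i by auto
          then show ?thesis using i vSuc vd unfolding S_def by auto
        qed
      qed
      have "M *\<^sub>v lincomb a (insert u A) = a u \<cdot>\<^sub>v (M *\<^sub>v u) + M *\<^sub>v lincomb a A"
        unfolding eq using M uc lc by (simp add: mult_add_distrib_mat_vec[of _ N N] mult_mat_vec)
      also have "\<dots> \<in> span S"
        using span_add1[OF Sc smult_in_span[OF Sc Mu] insert(3)[OF AS]] by simp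
      finally show ?case .
    qed
    then show ?thesis using yA by auto
  qed
  have allv: "v j \<in> span S" for j
  proof (induct j)
    case 0 then show ?case
    proof (cases "d = 0")
      case True then show ?thesis using vd unfolding S_def by simp
    next
      case False then show ?thesis using span_mem[OF Sc] unfolding S_def by auto
    qed
  next
    case (Suc j) then show ?case using inv vSuc by metis
  qed
  have Cz: "C *\<^sub>v y = 0\<^sub>v p" if y: "y \<in> span S" for y
  proof -
    obtain a A where yA: "y = lincomb a A" "finite A" "A \<subseteq> S" using in_spanE[OF y] by auto
    have "A \<subseteq> S \<Longrightarrow> C *\<^sub>v lincomb a A = 0\<^sub>v p" using yA(2)
    proof (induct A rule: finite_induct)
      case empty then show ?case using C by auto
    next
      case (insert u A)
      have uS: "u \<in> S" and AS: "A \<subseteq> S" using insert by auto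
      then have Ac: "A \<subseteq> carrier_vec N" and uc: "u \<in> carrier_vec N" using Sc by auto
      have eq: "lincomb a (insert u A) = a u \<cdot>\<^sub>v u + lincomb a A"
        using lincomb_insert2[OF insert(1) Ac _ insert(2) uc] by auto
      have lc: "lincomb a A \<in> carrier_vec N" using lincomb_closed[OF Ac] by auto
      have Cu: "C *\<^sub>v u = 0\<^sub>v p"
      proof -
        obtain i where i: "i < d" "u = v i" using uS unfolding S_def by auto
        then show ?thesis using h dN unfolding v_def by auto
      qed
      have "C *\<^sub>v lincomb a (insert u A) = a u \<cdot>\<^sub>v (C *\<^sub>v u) + C *\<^sub>v lincomb a A"
        unfolding eq using C uc lc by (simp add: mult_add_distrib_mat_vec[of _ p N] mult_mat_vec)
      also have "\<dots> = 0\<^sub>v p" using Cu insert(3)[OF AS] by auto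
      finally show ?case .
    qed
    then show ?thesis using yA by auto
  qed
  show ?thesis using Cz[OF allv[of N]] unfolding v_def .
qed

lemma mult_vec_index_sum: "M \<in> carrier_mat r c \<Longrightarrow> x \<in> carrier_vec c \<Longrightarrow> t < r \<Longrightarrow>
  (M *\<^sub>v x) $ t = (\<Sum>s<c. M $$ (t,s) * x $ s)"
  by (auto simp: scalar_prod_def lessThan_atLeast0 intro!: sum.cong)

lemma obsv_dims[simp]: "dim_row (obsv_mat C M N) = N * dim_row C" "dim_col (obsv_mat C M N) = dim_col C"
  unfolding obsv_mat_def by auto

lemma obsv_index:
  assumes C: "C \<in> carrier_mat p q" and M: "M \<in> carrier_mat q q" and x: "x \<in> carrier_vec q" and r: "r < N*p"
  shows "(obsv_mat C M N *\<^sub>v x) $ r = ((C * M ^\<^sub>m (r div p)) *\<^sub>v x) $ (r mod p)"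
proof -
  have p: "p > 0" using r by (cases p) auto
  have "(obsv_mat C M N *\<^sub>v x) $ r = (\<Sum>s<q. obsv_mat C M N $$ (r,s) * x $ s)"
    using C x r by (intro mult_vec_index_sum[of _ "N*p" q] carrier_matI) auto
  also have "\<dots> = (\<Sum>s<q. (C * M ^\<^sub>m (r div p)) $$ (r mod p, s) * x $ s)"
    using C r by (intro sum.cong refl) (auto simp: obsv_mat_def)
  also have "\<dots> = ((C * M ^\<^sub>m (r div p)) *\<^sub>v x) $ (r mod p)"
    using C M x p by (intro mult_vec_index_sum[symmetric, of _ p q]) auto
  finally show ?thesis .
qed

lemma obsv_ker:
  assumes C: "C \<in> carrier_mat p q" and M: "M \<in> carrier_mat q q" and x: "x \<in> carrier_vec q"
  shows "x \<in> mat_ker (obsv_mat C M N) \<longleftrightarrow> (\<forall>j<N. C *\<^sub>v (M ^\<^sub>m j *\<^sub>v x) = 0\<^sub>v p)"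
proof -
  have eq: "(C * M ^\<^sub>m j) *\<^sub>v x = C *\<^sub>v (M ^\<^sub>m j *\<^sub>v x)" for j
    using C M x by (intro assoc_mult_mat_vec[of _ p q _ q]) auto
  have "x \<in> mat_ker (obsv_mat C M N) \<longleftrightarrow> (\<forall>r<N*p. (obsv_mat C M N *\<^sub>v x) $ r = 0)"
    unfolding mat_ker_def using x C by (auto simp: vec_eq_iff)
  also have "\<dots> \<longleftrightarrow> (\<forall>j<N. C *\<^sub>v (M ^\<^sub>m j *\<^sub>v x) = 0\<^sub>v p)"
  proof
    assume h: "\<forall>r<N*p. (obsv_mat C M N *\<^sub>v x) $ r = 0"
    show "\<forall>j<N. C *\<^sub>v (M ^\<^sub>m j *\<^sub>v x) = 0\<^sub>v p"
    proof (intro allI impI eq_vecI)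
      fix j i assume j: "j < N" and i: "i < dim_vec (0\<^sub>v p :: real vec)"
      then have i': "i < p" by simp
      have r: "j*p + i < N*p"
      proof -
        have "j*p + i < j*p + p" using i' by simp
        also have "\<dots> = Suc j * p" by simp
        also have "\<dots> \<le> N * p" using j by (intro mult_right_mono) auto
        finally show ?thesis .
      qed
      have "(C *\<^sub>v (M ^\<^sub>m j *\<^sub>v x)) $ i = (obsv_mat C M N *\<^sub>v x) $ (j*p+i)"
        using obsv_index[OF C M x r] i' eq by simp
      then show "(C *\<^sub>v (M ^\<^sub>m j *\<^sub>v x)) $ i = 0\<^sub>v p $ i" using h r i' by simp
    qed (use C in auto)
  next
    assume h: "\<forall>j<N. C *\<^sub>v (M ^\<^sub>m j *\<^sub>v x) = 0\<^sub>v p"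
    show "\<forall>r<N*p. (obsv_mat C M N *\<^sub>v x) $ r = 0"
    proof (intro allI impI)
      fix r assume r: "r < N*p"
      then have p: "p > 0" by (cases p) auto
      have "r div p < N" using r p by (simp add: less_mult_imp_div_less)
      then show "(obsv_mat C M N *\<^sub>v x) $ r = 0"
        using obsv_index[OF C M x r] h eq p by simp
    qed
  qed
  finally show ?thesis .
qed

lemma obsv_invariant:
  fixes C M :: "real mat"
  assumes C: "C \<in> carrier_mat p q" and M: "M \<in> carrier_mat q q" and x: "x \<in> carrier_vec q"
    and h: "\<forall>j<q. C *\<^sub>v (M ^\<^sub>m j *\<^sub>v x) = 0\<^sub>v p"
  shows "\<forall>j<q. C *\<^sub>v (M ^\<^sub>m j *\<^sub>v (M *\<^sub>v x)) = 0\<^sub>v p"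
proof (intro allI impI)
  fix j assume j: "j < q"
  have eq: "M ^\<^sub>m j *\<^sub>v (M *\<^sub>v x) = M ^\<^sub>m (Suc j) *\<^sub>v x"
    using M x by (simp add: assoc_mult_mat_vec[of _ q q _ q])
  show "C *\<^sub>v (M ^\<^sub>m j *\<^sub>v (M *\<^sub>v x)) = 0\<^sub>v p"
  proof (cases "Suc j < q")
    case True then have "C *\<^sub>v (M ^\<^sub>m Suc j *\<^sub>v x) = 0\<^sub>v p" using h by blast
    then show ?thesis by (simp only: eq)
  next
    case False then have "Suc j = q" using j by simp
    then show ?thesis using krylov[OF M C x h] by (simp only: eq)
  qed
qed

lemma feedback_pow:
  assumes C: "C \<in> carrier_mat p q" and M: "M \<in> carrier_mat q q" and K: "K \<in> carrier_mat q p"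
    and x: "x \<in> carrier_vec q" and h: "\<forall>j<N. C *\<^sub>v (M ^\<^sub>m j *\<^sub>v x) = 0\<^sub>v p"
  shows "j \<le> N \<Longrightarrow> (M + K * C) ^\<^sub>m j *\<^sub>v x = M ^\<^sub>m j *\<^sub>v x"
proof (induct j)
  case 0 then show ?case using M K by simp
next
  case (Suc j)
  have MK: "M + K * C \<in> carrier_mat q q" using M K C by auto
  have "(M + K * C) ^\<^sub>m Suc j *\<^sub>v x = (M + K * C) *\<^sub>v ((M + K * C) ^\<^sub>m j *\<^sub>v x)"
    unfolding pow_mat_Suc'[OF MK] using MK x by (simp add: assoc_mult_mat_vec[of _ q q _ q])
  also have "\<dots> = (M + K * C) *\<^sub>v (M ^\<^sub>m j *\<^sub>v x)" using Suc by simp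
  also have "\<dots> = M *\<^sub>v (M ^\<^sub>m j *\<^sub>v x) + K *\<^sub>v (C *\<^sub>v (M ^\<^sub>m j *\<^sub>v x))"
  proof -
    have y: "M ^\<^sub>m j *\<^sub>v x \<in> carrier_vec q" using M x by (auto intro!: mult_mat_vec_carrier[of _ q q])
    have KC: "K * C \<in> carrier_mat q q" using K C by auto
    show ?thesis
      using add_mult_distrib_mat_vec[OF M KC y] assoc_mult_mat_vec[OF K C y] by simp
  qed
  also have "\<dots> = M *\<^sub>v (M ^\<^sub>m j *\<^sub>v x)"
  proof -
    have y: "M *\<^sub>v (M ^\<^sub>m j *\<^sub>v x) \<in> carrier_vec q" using M x by (auto intro!: mult_mat_vec_carrier[of _ q q])
    show ?thesis using h Suc M K x right_zero_vec[OF y] by simp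
  qed
  also have "\<dots> = M ^\<^sub>m Suc j *\<^sub>v x"
    unfolding pow_mat_Suc'[OF M] using M x by (simp add: assoc_mult_mat_vec[of _ q q _ q])
  finally show ?case .
qed

lemma feedback_ker:
  assumes C: "C \<in> carrier_mat p q" and M: "M \<in> carrier_mat q q" and K: "K \<in> carrier_mat q p"
    and x: "x \<in> carrier_vec q" and h: "\<forall>j<N. C *\<^sub>v (M ^\<^sub>m j *\<^sub>v x) = 0\<^sub>v p"
  shows "\<forall>j<N. C *\<^sub>v ((M + K * C) ^\<^sub>m j *\<^sub>v x) = 0\<^sub>v p"
  using feedback_pow[OF assms] h by simp

definition ks :: "real mat \<Rightarrow> real mat \<Rightarrow> nat \<Rightarrow> real vec set" where
  "ks A B d = {vec (dim_row B) (\<lambda>t. \<Sum>i<d. ((A ^\<^sub>m i * B) *\<^sub>v z i) $ t) | z. \<forall>i. z i \<in> carrier_vec (dim_col B)}"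

lemma mult_vec_sum:
  assumes M: "M \<in> carrier_mat r q" and g: "\<forall>i\<in>F. g i \<in> carrier_vec q"
  shows "M *\<^sub>v vec q (\<lambda>t. \<Sum>i\<in>F. g i $ t) = vec r (\<lambda>t. \<Sum>i\<in>F. (M *\<^sub>v g i) $ t)"
proof (rule eq_vecI)
  fix t assume "t < dim_vec (vec r (\<lambda>t. \<Sum>i\<in>F. (M *\<^sub>v g i) $ t))"
  then have t: "t < r" by simp
  have "(M *\<^sub>v vec q (\<lambda>t. \<Sum>i\<in>F. g i $ t)) $ t = (\<Sum>s<q. M $$ (t,s) * (\<Sum>i\<in>F. g i $ s))"
    using M t by (subst mult_vec_index_sum[of _ r q]) auto
  also have "\<dots> = (\<Sum>i\<in>F. \<Sum>s<q. M $$ (t,s) * g i $ s)"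
    by (simp add: sum_distrib_left sum.swap[of _ F])
  also have "\<dots> = (\<Sum>i\<in>F. (M *\<^sub>v g i) $ t)"
    using M t g by (intro sum.cong refl) (subst mult_vec_index_sum[of _ r q], auto)
  finally show "(M *\<^sub>v vec q (\<lambda>t. \<Sum>i\<in>F. g i $ t)) $ t = vec r (\<lambda>t. \<Sum>i\<in>F. (M *\<^sub>v g i) $ t) $ t"
    using t by simp
qed (use M in auto)

lemma mv_add_idx: "M \<in> carrier_mat q p \<Longrightarrow> a \<in> carrier_vec p \<Longrightarrow> b \<in> carrier_vec p \<Longrightarrow> t < q \<Longrightarrow>
  (M *\<^sub>v (a + b)) $ t = (M *\<^sub>v a) $ t + (M *\<^sub>v b) $ t"
  by (subst mult_add_distrib_mat_vec[of _ q p]) auto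

lemma mv_smult_idx: "(M :: real mat) \<in> carrier_mat q p \<Longrightarrow> a \<in> carrier_vec p \<Longrightarrow> t < q \<Longrightarrow>
  (M *\<^sub>v (c \<cdot>\<^sub>v a)) $ t = c * (M *\<^sub>v a) $ t"
  by (subst mult_mat_vec[of _ q p]) auto

context
  fixes A B :: "real mat" and q p :: nat
  assumes A: "A \<in> carrier_mat q q" and B: "B \<in> carrier_mat q p"
begin

lemma ks_ctrb: "ks A B N \<subseteq> mat_image (ctrb_mat A B N)"
proof
  fix x assume "x \<in> ks A B N"
  then obtain z where z: "\<forall>i. z i \<in> carrier_vec p" and x: "x = vec q (\<lambda>t. \<Sum>i<N. ((A ^\<^sub>m i * B) *\<^sub>v z i) $ t)"
    unfolding ks_def using B by auto
  define w where "w = vec (N*p) (\<lambda>c. z (c div p) $ (c mod p))"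
  have cd: "dim_row (ctrb_mat A B N) = q" "dim_col (ctrb_mat A B N) = N*p"
    using B by (auto simp: ctrb_mat_def)
  have "ctrb_mat A B N *\<^sub>v w = x"
  proof (rule eq_vecI)
    fix t assume "t < dim_vec x"
    then have t: "t < q" using x by simp
    have "(ctrb_mat A B N *\<^sub>v w) $ t = (\<Sum>c<N*p. ctrb_mat A B N $$ (t,c) * w $ c)"
      using cd t by (intro mult_vec_index_sum[of _ q "N*p"] carrier_matI) (auto simp: w_def)
    also have "\<dots> = (\<Sum>c<N*p. (A ^\<^sub>m (c div p) * B) $$ (t, c mod p) * z (c div p) $ (c mod p))"
      using t B by (intro sum.cong refl) (auto simp: ctrb_mat_def w_def)
    also have "\<dots> = (\<Sum>j<N. \<Sum>r<p. (A ^\<^sub>m j * B) $$ (t, r) * z j $ r)"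
      by (rule sum_div_mod)
    also have "\<dots> = x $ t"
      using x t A B z by (auto intro!: sum.cong simp del: index_mult_mat_vec, subst mult_vec_index_sum[of _ q p], auto)
    finally show "(ctrb_mat A B N *\<^sub>v w) $ t = x $ t" .
  qed (use cd x in auto)
  then show "x \<in> mat_image (ctrb_mat A B N)"
    unfolding mat_image_def using cd by (auto simp: w_def)
qed

lemma ks_elem: "(\<forall>i. z i \<in> carrier_vec p) \<Longrightarrow> vec q (\<lambda>t. \<Sum>i<d. ((A ^\<^sub>m i * B) *\<^sub>v z i) $ t) \<in> ks A B d"
  unfolding ks_def using B by auto

lemma ks_elemE: "x \<in> ks A B d \<Longrightarrow> \<exists>z. (\<forall>i. z i \<in> carrier_vec p) \<and> x = vec q (\<lambda>t. \<Sum>i<d. ((A ^\<^sub>m i * B) *\<^sub>v z i) $ t)"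
  unfolding ks_def using B by auto

lemma ks_carrier: "x \<in> ks A B d \<Longrightarrow> x \<in> carrier_vec q"
  using ks_elemE by fastforce

lemma ks_zero: "0\<^sub>v q \<in> ks A B d"
proof -
  have AB: "\<And>i. A ^\<^sub>m i * B \<in> carrier_mat q p" using A B by auto
  have "vec q (\<lambda>t. \<Sum>i<d. ((A ^\<^sub>m i * B) *\<^sub>v (0\<^sub>v p)) $ t) = 0\<^sub>v q"
    using AB by (intro eq_vecI) (auto simp: mult_zero_vec_right[OF AB])
  then show ?thesis using ks_elem[of "\<lambda>_. 0\<^sub>v p" d] by auto
qed

lemma ks_add: "x \<in> ks A B d \<Longrightarrow> y \<in> ks A B d \<Longrightarrow> x + y \<in> ks A B d"
proof -
  assume xk: "x \<in> ks A B d" and yk: "y \<in> ks A B d"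
  obtain z where z: "\<forall>i. z i \<in> carrier_vec p" "x = vec q (\<lambda>t. \<Sum>i<d. ((A ^\<^sub>m i * B) *\<^sub>v z i) $ t)"
    using ks_elemE[OF xk] by blast
  obtain z' where z': "\<forall>i. z' i \<in> carrier_vec p" "y = vec q (\<lambda>t. \<Sum>i<d. ((A ^\<^sub>m i * B) *\<^sub>v z' i) $ t)"
    using ks_elemE[OF yk] by blast
  have "x + y = vec q (\<lambda>t. \<Sum>i<d. ((A ^\<^sub>m i * B) *\<^sub>v (z i + z' i)) $ t)"
  proof (rule eq_vecI)
    fix t assume "t < dim_vec (vec q (\<lambda>t. \<Sum>i<d. ((A ^\<^sub>m i * B) *\<^sub>v (z i + z' i)) $ t))"
    then have t: "t < q" by simp
    have AB: "A ^\<^sub>m i * B \<in> carrier_mat q p" for i using A B by auto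
    show "(x + y) $ t = vec q (\<lambda>t. \<Sum>i<d. ((A ^\<^sub>m i * B) *\<^sub>v (z i + z' i)) $ t) $ t"
      using t z z' by (simp add: mv_add_idx[OF AB] sum.distrib del: index_mult_mat_vec)
  qed (use z z' in auto)
  moreover have "\<forall>i. z i + z' i \<in> carrier_vec p" using z z' by auto
  ultimately show ?thesis using ks_elem by auto
qed

lemma ks_smult: "x \<in> ks A B d \<Longrightarrow> c \<cdot>\<^sub>v x \<in> ks A B d"
proof -
  assume xk: "x \<in> ks A B d"
  obtain z where z: "\<forall>i. z i \<in> carrier_vec p" "x = vec q (\<lambda>t. \<Sum>i<d. ((A ^\<^sub>m i * B) *\<^sub>v z i) $ t)"
    using ks_elemE[OF xk] by blast
  have "c \<cdot>\<^sub>v x = vec q (\<lambda>t. \<Sum>i<d. ((A ^\<^sub>m i * B) *\<^sub>v (c \<cdot>\<^sub>v z i)) $ t)"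
  proof (rule eq_vecI)
    fix t assume "t < dim_vec (vec q (\<lambda>t. \<Sum>i<d. ((A ^\<^sub>m i * B) *\<^sub>v (c \<cdot>\<^sub>v z i)) $ t))"
    then have t: "t < q" by simp
    have AB: "A ^\<^sub>m i * B \<in> carrier_mat q p" for i using A B by auto
    show "(c \<cdot>\<^sub>v x) $ t = vec q (\<lambda>t. \<Sum>i<d. ((A ^\<^sub>m i * B) *\<^sub>v (c \<cdot>\<^sub>v z i)) $ t) $ t"
      using t z AB by (simp add: mv_smult_idx[OF AB] sum_distrib_left del: index_mult_mat_vec)
  qed (use z in auto)
  moreover have "\<forall>i. c \<cdot>\<^sub>v z i \<in> carrier_vec p" using z by auto
  ultimately show ?thesis using ks_elem by auto
qed

lemma ks_mono: "d \<le> d' \<Longrightarrow> x \<in> ks A B d \<Longrightarrow> x \<in> ks A B d'"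
proof -
  assume dd: "d \<le> d'" and xk: "x \<in> ks A B d"
  obtain z where z: "\<forall>i. z i \<in> carrier_vec p" "x = vec q (\<lambda>t. \<Sum>i<d. ((A ^\<^sub>m i * B) *\<^sub>v z i) $ t)"
    using ks_elemE[OF xk] by blast
  define z' where "z' i = (if i < d then z i else 0\<^sub>v p)" for i
  have z'c: "\<forall>i. z' i \<in> carrier_vec p" using z by (auto simp: z'_def)
  have "x = vec q (\<lambda>t. \<Sum>i<d'. ((A ^\<^sub>m i * B) *\<^sub>v z' i) $ t)"
  proof (rule eq_vecI)
    fix t assume "t < dim_vec (vec q (\<lambda>t. \<Sum>i<d'. ((A ^\<^sub>m i * B) *\<^sub>v z' i) $ t))"
    then have t: "t < q" by simp
    have AB: "A ^\<^sub>m i * B \<in> carrier_mat q p" for i using A B by auto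
    have "(\<Sum>i<d'. ((A ^\<^sub>m i * B) *\<^sub>v z' i) $ t) = (\<Sum>i<d. ((A ^\<^sub>m i * B) *\<^sub>v z' i) $ t)"
      using dd t AB by (intro sum.mono_neutral_right) (auto simp: z'_def mult_zero_vec_right[OF AB])
    also have "\<dots> = (\<Sum>i<d. ((A ^\<^sub>m i * B) *\<^sub>v z i) $ t)"
      by (intro sum.cong) (auto simp: z'_def)
    finally show "x $ t = vec q (\<lambda>t. \<Sum>i<d'. ((A ^\<^sub>m i * B) *\<^sub>v z' i) $ t) $ t"
      using z t by simp
  qed (use z in auto)
  then show ?thesis using ks_elem[OF z'c] by auto
qed

lemma ks_B: "y \<in> carrier_vec p \<Longrightarrow> B *\<^sub>v y \<in> ks A B 1"
proof -
  assume y: "y \<in> carrier_vec p"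
  have "B *\<^sub>v y = vec q (\<lambda>t. \<Sum>i<1. ((A ^\<^sub>m i * B) *\<^sub>v (\<lambda>_. y) i) $ t)"
    using A B y by (intro eq_vecI) auto
  moreover have "vec q (\<lambda>t. \<Sum>i<1. ((A ^\<^sub>m i * B) *\<^sub>v (\<lambda>_. y) i) $ t) \<in> ks A B 1"
    by (rule ks_elem) (use y in auto)
  ultimately show ?thesis by (simp only:)
qed

lemma ks_A: "x \<in> ks A B d \<Longrightarrow> A *\<^sub>v x \<in> ks A B (Suc d)"
proof -
  assume xk: "x \<in> ks A B d"
  obtain z where z: "\<forall>i. z i \<in> carrier_vec p" "x = vec q (\<lambda>t. \<Sum>i<d. ((A ^\<^sub>m i * B) *\<^sub>v z i) $ t)"
    using ks_elemE[OF xk] by blast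
  have AB: "A ^\<^sub>m i * B \<in> carrier_mat q p" for i using A B by auto
  have ABz: "\<forall>i\<in>{..<d}. (A ^\<^sub>m i * B) *\<^sub>v z i \<in> carrier_vec q" using AB z by (auto intro: mult_mat_vec_carrier)
  define z' where "z' i = (if i = 0 then 0\<^sub>v p else z (i - 1))" for i
  have z'c: "\<forall>i. z' i \<in> carrier_vec p" using z by (auto simp: z'_def)
  have step: "A *\<^sub>v ((A ^\<^sub>m i * B) *\<^sub>v z i) = (A ^\<^sub>m Suc i * B) *\<^sub>v z i" for i
  proof -
    have "A *\<^sub>v ((A ^\<^sub>m i * B) *\<^sub>v z i) = (A * (A ^\<^sub>m i * B)) *\<^sub>v z i"
      using A AB z by (intro assoc_mult_mat_vec[symmetric, of _ q q _ p]) auto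
    also have "A * (A ^\<^sub>m i * B) = A ^\<^sub>m Suc i * B"
      unfolding pow_mat_Suc'[OF A] using A B by (intro assoc_mult_mat[symmetric, of _ q q _ q _ p]) auto
    finally show ?thesis .
  qed
  have "A *\<^sub>v x = vec q (\<lambda>t. \<Sum>i<d. (A *\<^sub>v ((A ^\<^sub>m i * B) *\<^sub>v z i)) $ t)"
    unfolding z(2) by (rule mult_vec_sum[OF A ABz])
  also have "\<dots> = vec q (\<lambda>t. \<Sum>i<Suc d. ((A ^\<^sub>m i * B) *\<^sub>v z' i) $ t)"
  proof (rule eq_vecI)
    fix t assume "t < dim_vec (vec q (\<lambda>t. \<Sum>i<Suc d. ((A ^\<^sub>m i * B) *\<^sub>v z' i) $ t))"
    then have t: "t < q" by simp
    have "(\<Sum>i<Suc d. ((A ^\<^sub>m i * B) *\<^sub>v z' i) $ t) = ((A ^\<^sub>m 0 * B) *\<^sub>v z' 0) $ t + (\<Sum>i<d. ((A ^\<^sub>m Suc i * B) *\<^sub>v z' (Suc i)) $ t)"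
      by (rule sum.lessThan_Suc_shift)
    also have "((A ^\<^sub>m 0 * B) *\<^sub>v z' 0) $ t = 0" using t AB[of 0] by (simp add: z'_def)
    also have "(\<Sum>i<d. ((A ^\<^sub>m Suc i * B) *\<^sub>v z' (Suc i)) $ t) = (\<Sum>i<d. (A *\<^sub>v ((A ^\<^sub>m i * B) *\<^sub>v z i)) $ t)"
      by (intro sum.cong refl) (simp add: step z'_def)
    finally show "vec q (\<lambda>t. \<Sum>i<d. (A *\<^sub>v ((A ^\<^sub>m i * B) *\<^sub>v z i)) $ t) $ t = vec q (\<lambda>t. \<Sum>i<Suc d. ((A ^\<^sub>m i * B) *\<^sub>v z' i) $ t) $ t"
      using t by simp
  qed simp
  finally have e: "A *\<^sub>v x = vec q (\<lambda>t. \<Sum>i<Suc d. ((A ^\<^sub>m i * B) *\<^sub>v z' i) $ t)" .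
  show ?thesis unfolding e by (rule ks_elem[OF z'c])
qed

lemma ks_sum: "finite F \<Longrightarrow> \<forall>j\<in>F. f j \<in> ks A B d \<Longrightarrow> vec q (\<lambda>t. \<Sum>j\<in>F. f j $ t) \<in> ks A B d"
proof (induct F rule: finite_induct)
  case empty
  have "vec q (\<lambda>t. \<Sum>j\<in>{}. f j $ t) = 0\<^sub>v q" by (intro eq_vecI) auto
  then show ?case using ks_zero by simp
next
  case (insert a F)
  have fa: "f a \<in> ks A B d" and IH: "vec q (\<lambda>t. \<Sum>j\<in>F. f j $ t) \<in> ks A B d" using insert by auto
  have "vec q (\<lambda>t. \<Sum>j\<in>insert a F. f j $ t) = f a + vec q (\<lambda>t. \<Sum>j\<in>F. f j $ t)"
    using ks_carrier[OF fa] insert(1,2) by (intro eq_vecI) auto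
  then show ?case using ks_add[OF fa IH] by simp
qed

lemma ctrb_row_zero:
  assumes h: "\<forall>j c. c < p \<longrightarrow> (A ^\<^sub>m j * B) $$ (i, c) = 0" and i: "i < q"
    and y: "y \<in> mat_image (ctrb_mat A B N)"
  shows "y $ i = 0"
proof -
  obtain u where u: "u \<in> carrier_vec (N * p)" and yu: "y = ctrb_mat A B N *\<^sub>v u"
    using y B unfolding mat_image_def ctrb_mat_def by auto
  have cd: "ctrb_mat A B N \<in> carrier_mat q (N*p)" using B by (auto simp: ctrb_mat_def intro!: carrier_matI)
  have "y $ i = (\<Sum>c<N*p. ctrb_mat A B N $$ (i,c) * u $ c)"
    unfolding yu by (rule mult_vec_index_sum[OF cd u i])
  also have "\<dots> = 0"
  proof (intro sum.neutral ballI)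
    fix c assume c: "c \<in> {..<N*p}"
    then have p: "p > 0" by (cases p) auto
    have "ctrb_mat A B N $$ (i,c) = (A ^\<^sub>m (c div p) * B) $$ (i, c mod p)"
      using i c B by (auto simp: ctrb_mat_def)
    also have "\<dots> = 0" using h p by simp
    finally show "ctrb_mat A B N $$ (i,c) * u $ c = 0" by simp
  qed
  finally show ?thesis .
qed

end

lemma mult_unit_index: "(M :: real mat) \<in> carrier_mat r N \<Longrightarrow> i < r \<Longrightarrow> j < N \<Longrightarrow> (M *\<^sub>v unit_vec N j) $ i = M $$ (i,j)"
proof -
  assume M: "M \<in> carrier_mat r N" and i: "i < r" and j: "j < N"
  have "(M *\<^sub>v unit_vec N j) $ i = row M i \<bullet> unit_vec N j" using M i by simp
  also have "\<dots> = row M i $ j" using j by (rule scalar_prod_right_unit)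
  also have "\<dots> = M $$ (i,j)" using M i j by simp
  finally show ?thesis .
qed

lemma J_mult_vec_index:
  assumes x: "x \<in> carrier_vec (2*n)" and i: "i < 2*n"
  shows "(Jmat n *\<^sub>v x) $ i = (if i < n then x $ (i+n) else - x $ (i-n))"
proof -
  have "(Jmat n *\<^sub>v x) $ i = (\<Sum>t<2*n. Jmat n $$ (i,t) * x $ t)"
    using x i by (intro mult_vec_index_sum) auto
  also have "\<dots> = (\<Sum>t<2*n. if t = (if i < n then i + n else i - n) then (if i<n then x $ t else - x $ t) else 0)"
    using i by (intro sum.cong) (auto simp: Jmat_index)
  also have "\<dots> = (if i < n then x $ (i+n) else - x $ (i-n))"
    using i by (subst sum.delta) auto
  finally show ?thesis .
qed

lemma blk_cases: "blk n k l i \<in> {0,1,2,3,4,5}"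
  unfolding blk_def Let_def by auto

lemma blk_lt: "i < n \<Longrightarrow> blk n k l i < 3" "n \<le> i \<Longrightarrow> blk n k l i \<ge> 3"
  unfolding blk_def Let_def by auto

locale core =
  fixes n m k l :: nat and R C Sg P L :: "real mat" and a b c :: "nat \<Rightarrow> real"
  assumes n1: "n \<ge> 1" and m1: "m \<ge> 1"
    and R: "R \<in> carrier_mat (2*n) (2*n)" and Rsym: "transpose_mat R = R"
    and C: "C \<in> carrier_mat (2*m) (2*n)"
    and Sg: "Sg \<in> carrier_mat (2*m) (2*m)" and SgS: "Sg * sharp Sg = 1\<^sub>m (2*m)"
    and kl: "k + l \<le> n"
    and P: "P \<in> carrier_mat (4*n*m) (4*n*m)" and L: "L \<in> carrier_mat (4*n*m) (4*n*m)"
    and LP: "L * P = 1\<^sub>m (4*n*m)"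
    and O: "obsv_mat C (Jmat n * R) (2*n) = P * blockE (4*n*m) n k l a b c"
    and an: "\<forall>i<k. a i \<noteq> 0" and bn: "\<forall>i<l. b i \<noteq> 0" and cn: "\<forall>i<k. c i \<noteq> 0"
begin

abbreviation "N \<equiv> 2*n"
abbreviation "p \<equiv> 2*m"
abbreviation "Nr \<equiv> 4*n*m"
definition "H = Jmat n * R"
definition "S = sharp C"
definition "Am = H - (1/2) \<cdot>\<^sub>m (S * C)"
definition "Bm = - (S * Sg)"
definition "E = blockE Nr n k l a b c"

lemma Nr_eq: "N * p = Nr" by simp
lemma Nr_ge: "2*k + l \<le> Nr"
proof -
  have "2*k+l \<le> 4*n" using kl by simp
  also have "4*n \<le> 4*n*m" using m1 by simp
  finally show ?thesis .
qed

lemma H_carrier[simp]: "H \<in> carrier_mat N N" unfolding H_def by (rule mult_carrier_mat[OF Jmat_carrier R])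
lemma S_carrier[simp]: "S \<in> carrier_mat N p" using C by (simp add: S_def)
lemma E_carrier[simp]: "E \<in> carrier_mat Nr N" by (simp add: E_def blockE_def)
lemma SC_carrier[simp]: "S * C \<in> carrier_mat N N" by (rule mult_carrier_mat[OF S_carrier C])
lemma Am_carrier[simp]: "Am \<in> carrier_mat N N" unfolding Am_def
  by (rule minus_carrier_mat[OF smult_carrier_mat[OF SC_carrier]])
lemma Bm_carrier[simp]: "Bm \<in> carrier_mat N p" unfolding Bm_def
  by (rule uminus_carrier_mat, rule mult_carrier_mat[OF S_carrier Sg])

lemma kerE:
  assumes x: "x \<in> carrier_vec N"
  shows "E *\<^sub>v x = 0\<^sub>v Nr \<longleftrightarrow> (\<forall>i<N. blk n k l i \<in> {0,1,3} \<longrightarrow> x $ i = 0)"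
proof
  assume h: "E *\<^sub>v x = 0\<^sub>v Nr"
  have hr: "(E *\<^sub>v x) $ r = 0" if "r < Nr" for r using h that by simp
  show "\<forall>i<N. blk n k l i \<in> {0,1,3} \<longrightarrow> x $ i = 0"
  proof (intro allI impI)
    fix i assume i: "i < N" and bi: "blk n k l i \<in> {0,1,3}"
    consider (q0) "i < k" | (q1) "k \<le> i" "i < k + l" | (p0) "n \<le> i" "i < n + k"
      using bi kl unfolding blk_def Let_def by (auto split: if_splits)
    then show "x $ i = 0"
    proof cases
      case q0
      have "i < Nr" using q0 Nr_ge by linarith
      then show ?thesis using hr[of i] blockE_mult_vec[OF x _ kl] q0 an unfolding E_def by auto
    next
      case q1
      have "i < Nr" using q1 Nr_ge by linarith
      then show ?thesis using hr[of i] blockE_mult_vec[OF x _ kl] q1 bn unfolding E_def by auto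
    next
      case p0
      let ?r = "k + l + (i - n)"
      have r: "?r < Nr" using p0 Nr_ge by linarith
      have e1: "n + (?r - (k+l)) = i" "?r - (k+l) = i - n" using p0 by auto
      have c1: "\<not> ?r < k" "\<not> ?r < k + l" "?r < 2*k+l" using p0 by auto
      have "(E *\<^sub>v x) $ ?r = c (i - n) * x $ i"
        unfolding E_def blockE_mult_vec[OF x r kl] using c1 e1 by (simp only: if_False if_True)
      then have "c (i - n) * x $ i = 0" using hr[OF r] by simp
      moreover have "c (i - n) \<noteq> 0" using cn p0 by auto
      ultimately show ?thesis by simp
    qed
  qed
next
  assume h: "\<forall>i<N. blk n k l i \<in> {0,1,3} \<longrightarrow> x $ i = 0"
  show "E *\<^sub>v x = 0\<^sub>v Nr"
  proof (rule eq_vecI)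
    fix r assume "r < dim_vec (0\<^sub>v Nr :: real vec)"
    then have r: "r < Nr" by simp
    have b0: "r < k \<Longrightarrow> x $ r = 0" using h kl unfolding blk_def Let_def by auto
    have b1: "k \<le> r \<Longrightarrow> r < k + l \<Longrightarrow> x $ r = 0" using h kl unfolding blk_def Let_def by auto
    have b3: "k + l \<le> r \<Longrightarrow> r < 2*k+l \<Longrightarrow> x $ (n + (r - (k+l))) = 0"
      using h[rule_format, of "n + (r - (k+l))"] kl unfolding blk_def Let_def by auto
    show "(E *\<^sub>v x) $ r = 0\<^sub>v Nr $ r"
      using blockE_mult_vec[OF x r kl] b0 b1 b3 r unfolding E_def by auto
  qed (use x in \<open>auto simp: E_def blockE_def\<close>)
qed

lemma kerO:
  assumes x: "x \<in> carrier_vec N"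
  shows "(\<forall>j<N. C *\<^sub>v (H ^\<^sub>m j *\<^sub>v x) = 0\<^sub>v p) \<longleftrightarrow> (\<forall>i<N. blk n k l i \<in> {0,1,3} \<longrightarrow> x $ i = 0)"
proof -
  have "(\<forall>j<N. C *\<^sub>v (H ^\<^sub>m j *\<^sub>v x) = 0\<^sub>v p) \<longleftrightarrow> x \<in> mat_ker (obsv_mat C H N)"
    using obsv_ker[OF C H_carrier x] by simp
  also have "\<dots> \<longleftrightarrow> (P * E) *\<^sub>v x = 0\<^sub>v Nr"
    unfolding mat_ker_def using x O C P by (simp add: H_def E_def blockE_def)
  also have "\<dots> \<longleftrightarrow> E *\<^sub>v x = 0\<^sub>v Nr"
  proof
    assume h: "(P * E) *\<^sub>v x = 0\<^sub>v Nr"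
    have Ex: "E *\<^sub>v x \<in> carrier_vec Nr" using x by (auto intro: mult_mat_vec_carrier[OF E_carrier])
    have "E *\<^sub>v x = (L * P) *\<^sub>v (E *\<^sub>v x)" using LP Ex by simp
    also have "\<dots> = L *\<^sub>v ((P * E) *\<^sub>v x)"
      using assoc_mult_mat_vec[OF L P Ex] assoc_mult_mat_vec[OF P E_carrier x] by simp
    also have "\<dots> = 0\<^sub>v Nr" using h L by simp
    finally show "E *\<^sub>v x = 0\<^sub>v Nr" .
  next
    assume h: "E *\<^sub>v x = 0\<^sub>v Nr"
    show "(P * E) *\<^sub>v x = 0\<^sub>v Nr" using h P x by (simp add: assoc_mult_mat_vec[of _ Nr Nr _ N])
  qed
  also have "\<dots> \<longleftrightarrow> (\<forall>i<N. blk n k l i \<in> {0,1,3} \<longrightarrow> x $ i = 0)" by (rule kerE[OF x])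
  finally show ?thesis .
qed

end

context core begin

lemma unit_carrier: "unit_vec N j \<in> carrier_vec N" by simp

lemma unit_ker:
  assumes j: "j < N" and bj: "blk n k l j \<in> {2,4,5}"
  shows "\<forall>t<N. C *\<^sub>v (H ^\<^sub>m t *\<^sub>v unit_vec N j) = 0\<^sub>v p"
proof -
  have "\<forall>i<N. blk n k l i \<in> {0,1,3} \<longrightarrow> unit_vec N j $ i = 0"
    using bj j by (auto simp: unit_vec_def)
  then show ?thesis using kerO[OF unit_carrier] by blast
qed

lemma C_zero:
  assumes i: "i < p" and j: "j < N" and bj: "blk n k l j \<in> {2,4,5}"
  shows "C $$ (i,j) = 0"
proof -
  have z: "0 < N" using n1 by simp
  have "C *\<^sub>v (H ^\<^sub>m 0 *\<^sub>v unit_vec N j) = 0\<^sub>v p" using unit_ker[OF j bj, rule_format, OF z] .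
  then have "C *\<^sub>v unit_vec N j = 0\<^sub>v p" using carrier_matD[OF H_carrier] by simp
  then have "(C *\<^sub>v unit_vec N j) $ i = 0" using i by simp
  then show ?thesis using mult_unit_index[OF C i j] by simp
qed

lemma H_zero:
  assumes i: "i < N" and j: "j < N" and bi: "blk n k l i \<in> {0,1,3}" and bj: "blk n k l j \<in> {2,4,5}"
  shows "H $$ (i,j) = 0"
proof -
  have "\<forall>t<N. C *\<^sub>v (H ^\<^sub>m t *\<^sub>v (H *\<^sub>v unit_vec N j)) = 0\<^sub>v p"
    by (rule obsv_invariant[OF C H_carrier unit_carrier unit_ker[OF j bj]])
  moreover have "H *\<^sub>v unit_vec N j \<in> carrier_vec N" by (rule mult_mat_vec_carrier[OF H_carrier unit_carrier])
  ultimately have "(H *\<^sub>v unit_vec N j) $ i = 0" using kerO i bi by blast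
  then show ?thesis using mult_unit_index[OF H_carrier i j] by simp
qed

lemma H_index: "i < N \<Longrightarrow> j < N \<Longrightarrow> H $$ (i,j) = (if i < n then R $$ (i+n,j) else - R $$ (i-n,j))"
  unfolding H_def by (rule J_mult_index[OF R])

lemma R_sym: "s < N \<Longrightarrow> j < N \<Longrightarrow> R $$ (j,s) = R $$ (s,j)"
proof -
  assume "s < N" "j < N"
  then have "transpose_mat R $$ (s,j) = R $$ (j,s)" using R by simp
  then show ?thesis using Rsym by simp
qed

lemma R_zero:
  assumes s: "s < N" and j: "j < N" and bs: "blk n k l s \<in> {0,3,4}" and bj: "blk n k l j \<in> {2,4,5}"
  shows "R $$ (s,j) = 0 \<and> R $$ (j,s) = 0"
proof -
  have "R $$ (s,j) = 0"
  proof (cases "s < n")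
    case True
    then have b: "blk n k l (s+n) = 3" using bs blk_shift_up[OF True] blk_lt(1)[OF True, of k l] by auto
    have "H $$ (s+n, j) = 0" using H_zero[of "s+n" j] True j bj b by auto
    then show ?thesis using H_index[of "s+n" j] True j by simp
  next
    case False
    then have b: "blk n k l (s-n) \<in> {0,1}" using bs blk_shift_down[of n s k l] s by auto
    have "H $$ (s-n, j) = 0" using H_zero[of "s-n" j] False s j bj b by auto
    moreover have "s - n < n" "s - n + n = s" "s - n < N" using False s by auto
    ultimately show ?thesis using H_index[of "s-n" j] j by simp
  qed
  then show ?thesis using R_sym[OF s j] by simp
qed

lemma S_zero:
  assumes i: "i < N" and r: "r < p" and bi: "blk n k l i \<in> {1,2,5}"
  shows "S $$ (i,r) = 0"
proof -
  define Y where "Y = Jmat n * transpose_mat C"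
  have Yc: "Y \<in> carrier_mat N p" unfolding Y_def using C by (auto intro: mult_carrier_mat[OF Jmat_carrier])
  have Yz: "Y $$ (i,r') = 0" if r': "r' < p" for r'
  proof -
    have CT: "transpose_mat C \<in> carrier_mat N p" using C by simp
    have "Y $$ (i,r') = (if i < n then transpose_mat C $$ (i+n, r') else - transpose_mat C $$ (i-n, r'))"
      unfolding Y_def by (rule J_mult_index[OF CT i r'])
    also have "\<dots> = 0"
    proof (cases "i < n")
      case True
      then have "blk n k l (i+n) \<in> {2,4,5}" using bi blk_shift_up[OF True] blk_lt(1)[OF True, of k l] by auto
      then show ?thesis using True C r' C_zero[of r' "i+n"] by auto
    next
      case False
      then have "blk n k l (i-n) \<in> {2,4,5}" using bi blk_shift_down[of n i k l] i by auto
      then show ?thesis using False C r' i C_zero[of r' "i-n"] by auto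
    qed
    finally show ?thesis .
  qed
  have "S = - (Y * Jmat m)" unfolding S_def Y_def by (rule sharp_eq[OF C])
  then have "S $$ (i,r) = - ((Y * Jmat m) $$ (i,r))" using i r Yc by simp
  also have "(Y * Jmat m) $$ (i,r) = (if r < m then - Y $$ (i, r+m) else Y $$ (i, r-m))"
    by (rule mult_J_index[OF Yc i r])
  also have "\<dots> = 0" using Yz r by auto
  finally show ?thesis by simp
qed

lemma SC_zero:
  assumes i: "i < N" and j: "j < N" and h: "blk n k l i \<in> {1,2,5} \<or> blk n k l j \<in> {2,4,5}"
  shows "(S * C) $$ (i,j) = 0"
proof -
  have "(S * C) $$ (i,j) = (\<Sum>t<p. S $$ (i,t) * C $$ (t,j))"
    by (rule mult_index[OF S_carrier C i j])
  also have "\<dots> = 0" using h S_zero[OF i] C_zero[OF _ j] by (auto intro!: sum.neutral)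
  finally show ?thesis .
qed

lemma Am_index: "i < N \<Longrightarrow> j < N \<Longrightarrow> Am $$ (i,j) = H $$ (i,j) - 1/2 * (S * C) $$ (i,j)"
  unfolding Am_def using carrier_matD[OF H_carrier] carrier_matD[OF SC_carrier] by simp

lemma Am_zero:
  assumes i: "i < N" and j: "j < N" and z: "Ahat_zero (blk n k l i) (blk n k l j)"
  shows "Am $$ (i,j) = 0"
proof -
  have "blk n k l i \<in> {1,2,5} \<or> blk n k l j \<in> {2,4,5}" using z unfolding Ahat_zero_def by auto
  then have sc: "(S * C) $$ (i,j) = 0" by (rule SC_zero[OF i j])
  have h: "H $$ (i,j) = 0"
  proof -
    consider (a) "blk n k l i \<in> {0,1,3}" "blk n k l j \<in> {2,4,5}"
      | (b) "blk n k l i = 1" "blk n k l j \<in> {0,3}"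
      | (c) "blk n k l i = 2" "blk n k l j \<in> {0,3,4}"
      | (d) "blk n k l i = 5" "blk n k l j \<in> {0,3,4}"
      using z unfolding Ahat_zero_def by auto
    then show ?thesis
    proof cases
      case a then show ?thesis by (rule H_zero[OF i j])
    next
      case b
      then have lt: "i < n" using blk_lt(2)[of n i k l] by (cases "i < n") auto
      have "blk n k l (i+n) = 4" using b blk_shift_up[OF lt] by simp
      then have "R $$ (i+n, j) = 0" using R_zero[of j "i+n"] b j lt by auto
      then show ?thesis using H_index[OF i j] lt by simp
    next
      case c
      then have lt: "i < n" using blk_lt(2)[of n i k l] by (cases "i < n") auto
      have "blk n k l (i+n) = 5" using c blk_shift_up[OF lt] by simp
      then have "R $$ (i+n, j) = 0" using R_zero[of j "i+n"] c j lt by auto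
      then show ?thesis using H_index[OF i j] lt by simp
    next
      case d
      then have ge: "n \<le> i" using blk_lt(1)[of i n k l] by (cases "i < n") auto
      have "blk n k l (i-n) = 2" using d blk_shift_down[of n i k l, OF ge i] by simp
      then have "R $$ (i-n, j) = 0" using R_zero[of j "i-n"] d j i by auto
      then show ?thesis using H_index[OF i j] ge by simp
    qed
  qed
  show ?thesis using Am_index[OF i j] sc h by simp
qed

lemma Bm_zero:
  assumes i: "i < N" and j: "j < p" and bi: "blk n k l i \<in> {1,2,5}"
  shows "Bm $$ (i,j) = 0"
proof -
  have "(S * Sg) $$ (i,j) = (\<Sum>t<p. S $$ (i,t) * Sg $$ (t,j))"
    by (rule mult_index[OF S_carrier Sg i j])
  also have "\<dots> = 0" using S_zero[OF i _ bi] by (auto intro!: sum.neutral)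
  finally show ?thesis unfolding Bm_def using i j carrier_matD[OF S_carrier] carrier_matD[OF Sg] by simp
qed

end

context core begin

lemma Am_eq: "Am = H + ((-1/2) \<cdot>\<^sub>m S) * C"
proof (rule eq_matI)
  fix i j assume i: "i < dim_row (H + ((-1/2) \<cdot>\<^sub>m S) * C)" and j: "j < dim_col (H + ((-1/2) \<cdot>\<^sub>m S) * C)"
  then have i': "i < N" and j': "j < N" using carrier_matD[OF S_carrier] carrier_matD[OF C] by auto
  have "((-1/2) \<cdot>\<^sub>m S) * C = (-1/2) \<cdot>\<^sub>m (S * C)" by (rule mult_smult_assoc_mat[OF S_carrier C])
  then show "Am $$ (i,j) = (H + ((-1/2) \<cdot>\<^sub>m S) * C) $$ (i,j)"
    using Am_index[OF i' j'] i' j' carrier_matD[OF H_carrier] carrier_matD[OF SC_carrier] by simp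
qed (use carrier_matD[OF H_carrier] carrier_matD[OF Am_carrier] carrier_matD[OF C] carrier_matD[OF S_carrier] in auto)

lemma H_eq: "H = Am + ((1/2) \<cdot>\<^sub>m S) * C"
proof (rule eq_matI)
  fix i j assume i: "i < dim_row (Am + ((1/2) \<cdot>\<^sub>m S) * C)" and j: "j < dim_col (Am + ((1/2) \<cdot>\<^sub>m S) * C)"
  then have i': "i < N" and j': "j < N" using carrier_matD[OF S_carrier] carrier_matD[OF C] by auto
  have "((1/2) \<cdot>\<^sub>m S) * C = (1/2) \<cdot>\<^sub>m (S * C)" by (rule mult_smult_assoc_mat[OF S_carrier C])
  then show "H $$ (i,j) = (Am + ((1/2) \<cdot>\<^sub>m S) * C) $$ (i,j)"
    using Am_index[OF i' j'] i' j' carrier_matD[OF Am_carrier] carrier_matD[OF SC_carrier] by simp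
qed (use carrier_matD[OF H_carrier] carrier_matD[OF Am_carrier] carrier_matD[OF C] carrier_matD[OF S_carrier] in auto)

lemma kerA:
  assumes x: "x \<in> carrier_vec N"
  shows "(\<forall>j<N. C *\<^sub>v (Am ^\<^sub>m j *\<^sub>v x) = 0\<^sub>v p) \<longleftrightarrow> (\<forall>j<N. C *\<^sub>v (H ^\<^sub>m j *\<^sub>v x) = 0\<^sub>v p)"
proof
  have K: "(1/2) \<cdot>\<^sub>m S \<in> carrier_mat N p" by simp
  assume "\<forall>j<N. C *\<^sub>v (Am ^\<^sub>m j *\<^sub>v x) = 0\<^sub>v p"
  from feedback_ker[OF C Am_carrier K x this] show "\<forall>j<N. C *\<^sub>v (H ^\<^sub>m j *\<^sub>v x) = 0\<^sub>v p"
    unfolding H_eq[symmetric] .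
next
  have K: "(-1/2) \<cdot>\<^sub>m S \<in> carrier_mat N p" by simp
  assume "\<forall>j<N. C *\<^sub>v (H ^\<^sub>m j *\<^sub>v x) = 0\<^sub>v p"
  from feedback_ker[OF C H_carrier K x this] show "\<forall>j<N. C *\<^sub>v (Am ^\<^sub>m j *\<^sub>v x) = 0\<^sub>v p"
    unfolding Am_eq[symmetric] .
qed

lemma obs_unit:
  assumes i: "i < N" and bi: "blk n k l i \<in> {0,1,3}"
  shows "unit_vec N i \<in> observable_sub N Am C"
  unfolding observable_sub_def unobservable_sub_def orth_compl_def
proof (intro CollectI conjI ballI)
  show "unit_vec N i \<in> carrier_vec N" by simp
  fix y assume y: "y \<in> mat_ker (obsv_mat C Am N)"
  then have yc: "y \<in> carrier_vec N" unfolding mat_ker_def using C by auto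
  have "\<forall>j<N. C *\<^sub>v (Am ^\<^sub>m j *\<^sub>v y) = 0\<^sub>v p" using obsv_ker[OF C Am_carrier yc] y by simp
  then have "\<forall>j<N. C *\<^sub>v (H ^\<^sub>m j *\<^sub>v y) = 0\<^sub>v p" using kerA[OF yc] by simp
  then have "y $ i = 0" using kerO[OF yc] i bi by blast
  then show "unit_vec N i \<bullet> y = 0" using scalar_prod_left_unit[OF yc i] by simp
qed

lemma unobs_unit:
  assumes i: "i < N" and bi: "blk n k l i \<in> {2,4,5}"
  shows "unit_vec N i \<in> unobservable_sub N Am C"
proof -
  have "\<forall>j<N. C *\<^sub>v (Am ^\<^sub>m j *\<^sub>v unit_vec N i) = 0\<^sub>v p"
    using unit_ker[OF i bi] kerA[OF unit_carrier] by simp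
  then show ?thesis unfolding unobservable_sub_def using obsv_ker[OF C Am_carrier unit_carrier] by simp
qed

lemma AjB_zero: "i < N \<Longrightarrow> blk n k l i \<in> {1,2,5} \<Longrightarrow> c' < p \<Longrightarrow> (Am ^\<^sub>m j * Bm) $$ (i, c') = 0"
proof (induct j arbitrary: i)
  case 0
  then show ?case using Bm_zero[of i c'] carrier_matD[OF Am_carrier] carrier_matD[OF Bm_carrier] by simp
next
  case (Suc j)
  have AjB: "Am ^\<^sub>m j * Bm \<in> carrier_mat N p" by (rule mult_carrier_mat[OF pow_carrier_mat[OF Am_carrier] Bm_carrier])
  have "Am ^\<^sub>m Suc j * Bm = Am * (Am ^\<^sub>m j * Bm)"
    unfolding pow_mat_Suc'[OF Am_carrier]
    by (rule assoc_mult_mat[OF Am_carrier pow_carrier_mat[OF Am_carrier] Bm_carrier])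
  then have "(Am ^\<^sub>m Suc j * Bm) $$ (i, c') = (\<Sum>t<N. Am $$ (i,t) * (Am ^\<^sub>m j * Bm) $$ (t,c'))"
    using mult_index[OF Am_carrier AjB Suc(2) Suc(4)] by simp
  also have "\<dots> = 0"
  proof (intro sum.neutral ballI)
    fix t assume t: "t \<in> {..<N}"
    show "Am $$ (i,t) * (Am ^\<^sub>m j * Bm) $$ (t,c') = 0"
    proof (cases "blk n k l t \<in> {1,2,5}")
      case True then show ?thesis using Suc t by simp
    next
      case False
      then have "blk n k l t \<in> {0,3,4}" using blk_cases[of n k l t] by auto
      then have "Ahat_zero (blk n k l i) (blk n k l t)" using Suc(3) unfolding Ahat_zero_def by auto
      then show ?thesis using Am_zero[OF Suc(2), of t] t by simp
    qed
  qed
  finally show ?case .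
qed

lemma uncontr_unit:
  assumes i: "i < N" and bi: "blk n k l i \<in> {1,2,5}"
  shows "unit_vec N i \<in> uncontrollable_sub N Am Bm"
  unfolding uncontrollable_sub_def controllable_sub_def orth_compl_def
proof (intro CollectI conjI ballI)
  show "unit_vec N i \<in> carrier_vec N" by simp
  fix y assume y: "y \<in> mat_image (ctrb_mat Am Bm N)"
  then obtain u where yu: "y = ctrb_mat Am Bm N *\<^sub>v u" unfolding mat_image_def by auto
  have "dim_vec y = N" unfolding yu ctrb_mat_def using carrier_matD[OF Bm_carrier] by simp
  then have yc: "y \<in> carrier_vec N" by (rule carrier_vecI)
  have "y $ i = 0"
    by (rule ctrb_row_zero[OF Am_carrier Bm_carrier _ i y]) (use AjB_zero[OF i bi] in auto)
  then show "unit_vec N i \<bullet> y = 0" using scalar_prod_left_unit[OF yc i] by simp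
qed

end

context core begin

lemmas dims = carrier_matD[OF S_carrier] carrier_matD[OF Sg] carrier_matD[OF C] carrier_matD[OF H_carrier]
  carrier_matD[OF Am_carrier] carrier_matD[OF Bm_carrier] carrier_matD[OF R] carrier_matD[OF sharp_carrier[OF Sg]]

definition "Fm = (-1/2) \<cdot>\<^sub>m (sharp Sg * C)"

lemma sSg_carrier[simp]: "sharp Sg \<in> carrier_mat p p" using Sg by simp
lemma Fm_carrier[simp]: "Fm \<in> carrier_mat p N" unfolding Fm_def
  by (rule smult_carrier_mat[OF mult_carrier_mat[OF sSg_carrier C]])

lemma BmFm: "Bm * Fm = (1/2) \<cdot>\<^sub>m (S * C)"
proof -
  have SSg: "S * Sg \<in> carrier_mat N p" by (rule mult_carrier_mat[OF S_carrier Sg])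
  have sC: "sharp Sg * C \<in> carrier_mat p N" by (rule mult_carrier_mat[OF sSg_carrier C])
  have "Bm * Fm = - ((S * Sg) * ((-1/2) \<cdot>\<^sub>m (sharp Sg * C)))" unfolding Bm_def Fm_def by (simp add: dims)
  also have "(S * Sg) * ((-1/2) \<cdot>\<^sub>m (sharp Sg * C)) = (-1/2) \<cdot>\<^sub>m ((S * Sg) * (sharp Sg * C))"
    by (rule mult_smult_distrib[OF SSg sC])
  also have "(S * Sg) * (sharp Sg * C) = S * ((Sg * sharp Sg) * C)"
    using carrier_matD[OF S_carrier] carrier_matD[OF Sg] carrier_matD[OF sSg_carrier] carrier_matD[OF C]
    by (intro assoc4) auto
  also have "\<dots> = S * C" using SgS C by simp
  finally show ?thesis by (intro eq_matI) (auto simp: carrier_matD[OF SC_carrier])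
qed

lemma H_Bm: "x \<in> carrier_vec N \<Longrightarrow> H *\<^sub>v x = Am *\<^sub>v x + Bm *\<^sub>v (Fm *\<^sub>v x)"
proof -
  assume x: "x \<in> carrier_vec N"
  have "((1/2) \<cdot>\<^sub>m S) * C = (1/2) \<cdot>\<^sub>m (S * C)" by (rule mult_smult_assoc_mat[OF S_carrier C])
  then have "H = Am + Bm * Fm" using H_eq BmFm by simp
  then have "H *\<^sub>v x = Am *\<^sub>v x + (Bm * Fm) *\<^sub>v x"
    using add_mult_distrib_mat_vec[OF Am_carrier mult_carrier_mat[OF Bm_carrier Fm_carrier] x] by simp
  also have "(Bm * Fm) *\<^sub>v x = Bm *\<^sub>v (Fm *\<^sub>v x)" by (rule assoc_mult_mat_vec[OF Bm_carrier Fm_carrier x])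
  finally show ?thesis .
qed

lemma H_ks: "y \<in> carrier_vec p \<Longrightarrow> H ^\<^sub>m j *\<^sub>v (Bm *\<^sub>v y) \<in> ks Am Bm (Suc j)"
proof (induct j)
  case 0
  have "H ^\<^sub>m 0 *\<^sub>v (Bm *\<^sub>v y) = Bm *\<^sub>v y"
    using carrier_matD[OF H_carrier] mult_mat_vec_carrier[OF Bm_carrier 0] by simp
  then show ?case using ks_B[OF Am_carrier Bm_carrier 0] by simp
next
  case (Suc j)
  let ?x = "H ^\<^sub>m j *\<^sub>v (Bm *\<^sub>v y)"
  have By: "Bm *\<^sub>v y \<in> carrier_vec N" by (rule mult_mat_vec_carrier[OF Bm_carrier Suc(2)])
  have xc: "?x \<in> carrier_vec N" by (rule mult_mat_vec_carrier[OF pow_carrier_mat[OF H_carrier] By])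
  have xk: "?x \<in> ks Am Bm (Suc j)" using Suc by simp
  have "H ^\<^sub>m Suc j *\<^sub>v (Bm *\<^sub>v y) = H *\<^sub>v ?x"
    unfolding pow_mat_Suc'[OF H_carrier] by (rule assoc_mult_mat_vec[OF H_carrier pow_carrier_mat[OF H_carrier] By])
  also have "\<dots> = Am *\<^sub>v ?x + Bm *\<^sub>v (Fm *\<^sub>v ?x)" by (rule H_Bm[OF xc])
  also have "\<dots> \<in> ks Am Bm (Suc (Suc j))"
  proof (rule ks_add[OF Am_carrier Bm_carrier])
    show "Am *\<^sub>v ?x \<in> ks Am Bm (Suc (Suc j))" by (rule ks_A[OF Am_carrier Bm_carrier xk])
    have "Bm *\<^sub>v (Fm *\<^sub>v ?x) \<in> ks Am Bm 1"
      by (rule ks_B[OF Am_carrier Bm_carrier mult_mat_vec_carrier[OF Fm_carrier xc]])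
    then show "Bm *\<^sub>v (Fm *\<^sub>v ?x) \<in> ks Am Bm (Suc (Suc j))" by (rule ks_mono[OF Am_carrier Bm_carrier, rotated]) simp
  qed
  finally show ?case .
qed

lemma JH_T: "Jmat n * transpose_mat H = - (H * Jmat n)"
proof -
  have "transpose_mat H = transpose_mat R * transpose_mat (Jmat n)"
    unfolding H_def by (rule transpose_mult[OF Jmat_carrier R])
  also have "\<dots> = - (R * Jmat n)" using Rsym R by (simp add: transpose_J)
  finally have "Jmat n * transpose_mat H = - (Jmat n * (R * Jmat n))"
    using R by simp
  also have "Jmat n * (R * Jmat n) = H * Jmat n"
    unfolding H_def using R by (intro assoc_d[symmetric]) auto
  finally show ?thesis .
qed

lemma JCT: "Jmat n * transpose_mat C = Bm * (- (sharp Sg * Jmat m))"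
proof -
  have CT: "transpose_mat C \<in> carrier_mat N p" using C by simp
  have SSg: "S * Sg \<in> carrier_mat N p" by (rule mult_carrier_mat[OF S_carrier Sg])
  have sJ: "sharp Sg * Jmat m \<in> carrier_mat p p" by (rule mult_carrier_mat[OF sSg_carrier Jmat_carrier])
  have "Bm * (- (sharp Sg * Jmat m)) = (S * Sg) * (sharp Sg * Jmat m)" unfolding Bm_def by (simp add: dims)
  also have "\<dots> = S * ((Sg * sharp Sg) * Jmat m)"
    using carrier_matD[OF S_carrier] carrier_matD[OF Sg] carrier_matD[OF sSg_carrier]
    by (intro assoc4) auto
  also have "\<dots> = S * Jmat m" using SgS by simp
  also have "\<dots> = - ((Jmat n * transpose_mat C * Jmat m) * Jmat m)" unfolding S_def sharp_eq[OF C] by simp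
  also have "(Jmat n * transpose_mat C * Jmat m) * Jmat m = (Jmat n * transpose_mat C) * (Jmat m * Jmat m)"
    using CT by (intro assoc_d) auto
  also have "\<dots> = - (Jmat n * transpose_mat C)" using CT by (simp add: JJ)
  finally show ?thesis by simp
qed

lemma JOT: "\<exists>G. G \<in> carrier_mat p p \<and> Jmat n * transpose_mat (C * H ^\<^sub>m j) = H ^\<^sub>m j * Bm * G"
proof (induct j)
  case 0
  have "Jmat n * transpose_mat (C * H ^\<^sub>m 0) = Jmat n * transpose_mat C"
    using C carrier_matD[OF H_carrier] by simp
  also have "\<dots> = H ^\<^sub>m 0 * Bm * (- (sharp Sg * Jmat m))"
    using JCT carrier_matD[OF H_carrier] carrier_matD[OF Bm_carrier] by simp
  finally show ?case
    by (intro exI[of _ "- (sharp Sg * Jmat m)"] conjI)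
       (auto intro: uminus_carrier_mat mult_carrier_mat[OF sSg_carrier Jmat_carrier])
next
  case (Suc j)
  then obtain G where G: "G \<in> carrier_mat p p" and eq: "Jmat n * transpose_mat (C * H ^\<^sub>m j) = H ^\<^sub>m j * Bm * G" by auto
  have Hj: "H ^\<^sub>m j \<in> carrier_mat N N" by simp
  have CHj: "C * H ^\<^sub>m j \<in> carrier_mat p N" by (rule mult_carrier_mat[OF C Hj])
  have "C * H ^\<^sub>m Suc j = (C * H ^\<^sub>m j) * H"
    by (simp, rule assoc_mult_mat[symmetric, OF C Hj H_carrier])
  then have "transpose_mat (C * H ^\<^sub>m Suc j) = transpose_mat H * transpose_mat (C * H ^\<^sub>m j)"
    using transpose_mult[OF CHj H_carrier] by simp
  then have "Jmat n * transpose_mat (C * H ^\<^sub>m Suc j) = (Jmat n * transpose_mat H) * transpose_mat (C * H ^\<^sub>m j)"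
    using CHj by (simp add: assoc_d dims)
  also have "\<dots> = - ((H * Jmat n) * transpose_mat (C * H ^\<^sub>m j))" unfolding JH_T using CHj by (simp add: dims)
  also have "(H * Jmat n) * transpose_mat (C * H ^\<^sub>m j) = H * (H ^\<^sub>m j * Bm * G)"
    unfolding eq[symmetric] using CHj by (intro assoc_d) (auto simp: dims)
  also have "H * (H ^\<^sub>m j * Bm * G) = H ^\<^sub>m Suc j * Bm * G"
    unfolding pow_mat_Suc'[OF H_carrier] using G by (simp add: assoc_d dims)
  finally have "Jmat n * transpose_mat (C * H ^\<^sub>m Suc j) = H ^\<^sub>m Suc j * Bm * (- G)" using G by (simp add: dims)
  then show ?case using G by (intro exI[of _ "- G"]) (auto intro: uminus_carrier_mat)
qed

end

context core begin

definition "wv w j = vec p (\<lambda>r. w $ (j*p + r))"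

lemma wv_carrier[simp]: "wv w j \<in> carrier_vec p" by (simp add: wv_def)

lemma O_carrier: "obsv_mat C H N \<in> carrier_mat Nr N"
  using carrier_matD[OF C] by (intro carrier_matI) auto

lemma O_carrier2: "obsv_mat C H N \<in> carrier_mat (N*p) N"
  using carrier_matD[OF C] by (intro carrier_matI) auto

lemma OT_decomp:
  assumes w: "w \<in> carrier_vec Nr"
  shows "transpose_mat (obsv_mat C H N) *\<^sub>v w = vec N (\<lambda>i. \<Sum>j<N. (transpose_mat (C * H ^\<^sub>m j) *\<^sub>v wv w j) $ i)"
proof (rule eq_vecI)
  fix i assume "i < dim_vec (vec N (\<lambda>i. \<Sum>j<N. (transpose_mat (C * H ^\<^sub>m j) *\<^sub>v wv w j) $ i))"
  then have i: "i < N" by simp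
  have OT: "transpose_mat (obsv_mat C H N) \<in> carrier_mat N (N*p)" using O_carrier2 by simp
  have "(transpose_mat (obsv_mat C H N) *\<^sub>v w) $ i = (\<Sum>c<N*p. transpose_mat (obsv_mat C H N) $$ (i,c) * w $ c)"
    using w unfolding Nr_eq[symmetric] by (intro mult_vec_index_sum[OF OT _ i])
  also have "\<dots> = (\<Sum>c<N*p. (C * H ^\<^sub>m (c div p)) $$ (c mod p, i) * wv w (c div p) $ (c mod p))"
  proof (intro sum.cong refl)
    fix c assume c: "c \<in> {..<N*p}"
    have p: "p > 0" using m1 by simp
    have dm: "c div p * p + c mod p = c" by (rule div_mult_mod_eq)
    have "wv w (c div p) $ (c mod p) = w $ (c div p * p + c mod p)" using p unfolding wv_def by simp
    then have "w $ c = wv w (c div p) $ (c mod p)" unfolding dm by simp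
    moreover have "transpose_mat (obsv_mat C H N) $$ (i,c) = (C * H ^\<^sub>m (c div p)) $$ (c mod p, i)"
      using c i carrier_matD[OF C] by (simp add: obsv_mat_def)
    ultimately show "transpose_mat (obsv_mat C H N) $$ (i,c) * w $ c = (C * H ^\<^sub>m (c div p)) $$ (c mod p, i) * wv w (c div p) $ (c mod p)"
      by simp
  qed
  also have "\<dots> = (\<Sum>j<N. \<Sum>r<p. (C * H ^\<^sub>m j) $$ (r, i) * wv w j $ r)"
    by (rule sum_div_mod)
  also have "\<dots> = (\<Sum>j<N. (transpose_mat (C * H ^\<^sub>m j) *\<^sub>v wv w j) $ i)"
  proof (intro sum.cong refl)
    fix j
    have CHj: "transpose_mat (C * H ^\<^sub>m j) \<in> carrier_mat N p"
      using mult_carrier_mat[OF C pow_carrier_mat[OF H_carrier]] by simp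
    have "(transpose_mat (C * H ^\<^sub>m j) *\<^sub>v wv w j) $ i = (\<Sum>r<p. transpose_mat (C * H ^\<^sub>m j) $$ (i,r) * wv w j $ r)"
      by (rule mult_vec_index_sum[OF CHj wv_carrier i])
    also have "\<dots> = (\<Sum>r<p. (C * H ^\<^sub>m j) $$ (r, i) * wv w j $ r)"
      using i carrier_matD[OF C] carrier_matD[OF H_carrier] by (intro sum.cong refl) simp
    finally show "(\<Sum>r<p. (C * H ^\<^sub>m j) $$ (r, i) * wv w j $ r) = (transpose_mat (C * H ^\<^sub>m j) *\<^sub>v wv w j) $ i" by simp
  qed
  finally show "(transpose_mat (obsv_mat C H N) *\<^sub>v w) $ i = vec N (\<lambda>i. \<Sum>j<N. (transpose_mat (C * H ^\<^sub>m j) *\<^sub>v wv w j) $ i) $ i"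
    using i by simp
qed (use O_carrier2 in auto)

definition "r0 t = (if t < n then t else k + l + (t - n))"
definition "d0 t = (if t < k then a t else if t < n then b (t - k) else c (t - n))"

lemma blk013: "t < N \<Longrightarrow> blk n k l t \<in> {0,1,3} \<Longrightarrow> t < k \<or> (k \<le> t \<and> t < k + l) \<or> (n \<le> t \<and> t < n + k)"
  unfolding blk_def Let_def by (cases "t < n"; cases "t < k"; cases "t < k + l"; cases "t - n < k"; cases "t - n < k + l") auto

lemma r0_lt: assumes "t < N" "blk n k l t \<in> {0,1,3}" shows "r0 t < Nr"
proof -
  have "r0 t < 2*k + l" using blk013[OF assms] kl unfolding r0_def by auto
  then show ?thesis using Nr_ge by linarith
qed

lemma d0_nz: assumes "t < N" "blk n k l t \<in> {0,1,3}" shows "d0 t \<noteq> 0"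
proof -
  consider (A) "t < k" | (B) "k \<le> t" "t < k + l" | (D) "n \<le> t" "t < n + k" using blk013[OF assms] by blast
  then show ?thesis
  proof cases
    case A then show ?thesis using an unfolding d0_def by simp
  next
    case B then have "t < n" "t - k < l" using kl by auto
    then show ?thesis using B bn unfolding d0_def by simp
  next
    case D then have "\<not> t < k" "\<not> t < n" "t - n < k" using kl by auto
    then show ?thesis using cn unfolding d0_def by simp
  qed
qed

lemma E_row: assumes t: "t < N" "blk n k l t \<in> {0,1,3}" and j: "j < N"
  shows "E $$ (r0 t, j) = (if j = t then d0 t else 0)"
proof -
  have r: "r0 t < Nr" by (rule r0_lt[OF t])
  have "E $$ (r0 t, j) = (if r0 t < k \<and> j = r0 t then a (r0 t)
     else if k \<le> r0 t \<and> r0 t < k + l \<and> j = r0 t then b (r0 t - k)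
     else if k + l \<le> r0 t \<and> r0 t < 2*k + l \<and> j = n + (r0 t - (k + l)) then c (r0 t - (k + l))
     else 0)" unfolding E_def blockE_def using r j by simp
  also have "\<dots> = (if j = t then d0 t else 0)"
  proof -
    consider (A) "t < k" | (B) "k \<le> t" "t < k + l" | (D) "n \<le> t" "t < n + k" using blk013[OF t] by blast
    then show ?thesis
    proof cases
      case A then have "r0 t = t" "d0 t = a t" "t < n" using kl unfolding r0_def d0_def by auto
      then show ?thesis using A by simp
    next
      case B then have "r0 t = t" "d0 t = b (t - k)" "t < n" using kl unfolding r0_def d0_def by auto
      then show ?thesis using B by simp
    next
      case D then have e: "r0 t = k + l + (t - n)" "d0 t = c (t - n)" using kl unfolding r0_def d0_def by auto
      have "\<not> r0 t < k" "\<not> r0 t < k + l" "k + l \<le> r0 t" "r0 t < 2*k + l" "n + (r0 t - (k + l)) = t" "r0 t - (k+l) = t - n"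
        using D e by auto
      then show ?thesis using e by (simp only: if_False if_True simp_thms)
    qed
  qed
  finally show ?thesis .
qed

lemma OT_unit:
  assumes t: "t < N" and bt: "blk n k l t \<in> {0,1,3}"
  shows "transpose_mat (obsv_mat C H N) *\<^sub>v (transpose_mat L *\<^sub>v ((1 / d0 t) \<cdot>\<^sub>v unit_vec Nr (r0 t))) = unit_vec N t"
proof -
  let ?u = "(1 / d0 t) \<cdot>\<^sub>v unit_vec Nr (r0 t)"
  have u: "?u \<in> carrier_vec Nr" by simp
  have ET: "transpose_mat E \<in> carrier_mat N Nr" by simp
  have PT: "transpose_mat P \<in> carrier_mat Nr Nr" using P by simp
  have LT: "transpose_mat L \<in> carrier_mat Nr Nr" using L by simp
  have OE: "obsv_mat C H N = P * E" using O unfolding H_def E_def by simp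
  have "transpose_mat (obsv_mat C H N) = transpose_mat E * transpose_mat P"
    unfolding OE by (rule transpose_mult[OF P E_carrier])
  then have "transpose_mat (obsv_mat C H N) *\<^sub>v (transpose_mat L *\<^sub>v ?u) = transpose_mat E *\<^sub>v (transpose_mat P *\<^sub>v (transpose_mat L *\<^sub>v ?u))"
    using assoc_mult_mat_vec[OF ET PT mult_mat_vec_carrier[OF LT u]] by simp
  also have "transpose_mat P *\<^sub>v (transpose_mat L *\<^sub>v ?u) = (transpose_mat P * transpose_mat L) *\<^sub>v ?u"
    by (rule assoc_mult_mat_vec[symmetric, OF PT LT u])
  also have "transpose_mat P * transpose_mat L = transpose_mat (L * P)"
    by (rule transpose_mult[symmetric, OF L P])
  also have "\<dots> = 1\<^sub>m Nr" using LP by simp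
  also have "1\<^sub>m Nr *\<^sub>v ?u = ?u" using u by simp
  also have "transpose_mat E *\<^sub>v ?u = (1 / d0 t) \<cdot>\<^sub>v (transpose_mat E *\<^sub>v unit_vec Nr (r0 t))"
    by (rule mult_mat_vec[OF ET]) simp
  also have "\<dots> = unit_vec N t"
  proof (rule eq_vecI)
    fix j assume "j < dim_vec (unit_vec N t :: real vec)"
    then have j: "j < N" by simp
    have "(transpose_mat E *\<^sub>v unit_vec Nr (r0 t)) $ j = transpose_mat E $$ (j, r0 t)"
      by (rule mult_unit_index[OF ET j r0_lt[OF t bt]])
    also have "\<dots> = E $$ (r0 t, j)" using j r0_lt[OF t bt] carrier_matD[OF E_carrier] by simp
    also have "\<dots> = (if j = t then d0 t else 0)" by (rule E_row[OF t bt j])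
    finally show "((1 / d0 t) \<cdot>\<^sub>v (transpose_mat E *\<^sub>v unit_vec Nr (r0 t))) $ j = unit_vec N t $ j"
      using j t d0_nz[OF t bt] carrier_matD[OF E_carrier] by simp
  qed (simp add: carrier_matD[OF E_carrier])
  finally show ?thesis .
qed

lemma contr_unit:
  assumes s: "s < N" and bs: "blk n k l s \<in> {0,3,4}"
  shows "unit_vec N s \<in> controllable_sub N Am Bm"
proof -
  define t where "t = (if s < n then s + n else s - n)"
  have t: "t < N" using s by (auto simp: t_def)
  have bt: "blk n k l t \<in> {0,1,3}"
  proof (cases "s < n")
    case True then show ?thesis using bs blk_shift_up[OF True, of k l] blk_lt(1)[OF True, of k l] by (auto simp: t_def)
  next
    case False then show ?thesis using bs blk_shift_down[of n s k l] s by (auto simp: t_def)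
  qed
  define w where "w = transpose_mat L *\<^sub>v ((1 / d0 t) \<cdot>\<^sub>v unit_vec Nr (r0 t))"
  have wc: "w \<in> carrier_vec Nr" unfolding w_def using L by (auto intro: mult_mat_vec_carrier)
  have et: "unit_vec N t = vec N (\<lambda>i. \<Sum>j<N. (transpose_mat (C * H ^\<^sub>m j) *\<^sub>v wv w j) $ i)"
    using OT_unit[OF t bt] OT_decomp[OF wc] unfolding w_def by simp
  have gc: "\<forall>j\<in>{..<N}. transpose_mat (C * H ^\<^sub>m j) *\<^sub>v wv w j \<in> carrier_vec N"
    using mult_carrier_mat[OF C pow_carrier_mat[OF H_carrier]] by (auto intro!: mult_mat_vec_carrier[of _ N p])
  have "Jmat n *\<^sub>v unit_vec N t = vec N (\<lambda>i. \<Sum>j<N. (Jmat n *\<^sub>v (transpose_mat (C * H ^\<^sub>m j) *\<^sub>v wv w j)) $ i)"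
    unfolding et by (rule mult_vec_sum[OF Jmat_carrier gc])
  also have "\<dots> \<in> ks Am Bm N"
  proof (rule ks_sum[OF Am_carrier Bm_carrier], simp, intro ballI)
    fix j assume j: "j \<in> {..<N}"
    obtain G where G: "G \<in> carrier_mat p p" and eq: "Jmat n * transpose_mat (C * H ^\<^sub>m j) = H ^\<^sub>m j * Bm * G"
      using JOT by blast
    have CT: "transpose_mat (C * H ^\<^sub>m j) \<in> carrier_mat N p"
      using mult_carrier_mat[OF C pow_carrier_mat[OF H_carrier]] by simp
    have Hj: "H ^\<^sub>m j \<in> carrier_mat N N" by simp
    have "Jmat n *\<^sub>v (transpose_mat (C * H ^\<^sub>m j) *\<^sub>v wv w j) = (Jmat n * transpose_mat (C * H ^\<^sub>m j)) *\<^sub>v wv w j"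
      by (rule assoc_mult_mat_vec[symmetric, OF Jmat_carrier CT wv_carrier])
    also have "\<dots> = (H ^\<^sub>m j * Bm * G) *\<^sub>v wv w j" unfolding eq ..
    also have "\<dots> = H ^\<^sub>m j *\<^sub>v (Bm *\<^sub>v (G *\<^sub>v wv w j))"
      using assoc_mult_mat_vec[OF mult_carrier_mat[OF Hj Bm_carrier] G wv_carrier]
        assoc_mult_mat_vec[OF Hj Bm_carrier mult_mat_vec_carrier[OF G wv_carrier]] by simp
    also have "\<dots> \<in> ks Am Bm (Suc j)" by (rule H_ks[OF mult_mat_vec_carrier[OF G wv_carrier]])
    finally show "Jmat n *\<^sub>v (transpose_mat (C * H ^\<^sub>m j) *\<^sub>v wv w j) \<in> ks Am Bm N"
      using ks_mono[OF Am_carrier Bm_carrier, of "Suc j" N] j by auto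
  qed
  finally have Jt: "Jmat n *\<^sub>v unit_vec N t \<in> ks Am Bm N" .
  define sg :: real where "sg = (if s < n then 1 else -1)"
  have "unit_vec N s = sg \<cdot>\<^sub>v (Jmat n *\<^sub>v unit_vec N t)"
  proof (rule eq_vecI)
    fix i assume "i < dim_vec (sg \<cdot>\<^sub>v (Jmat n *\<^sub>v unit_vec N t))"
    then have i: "i < N" by simp
    show "unit_vec N s $ i = (sg \<cdot>\<^sub>v (Jmat n *\<^sub>v unit_vec N t)) $ i"
      using i s J_mult_vec_index[OF unit_carrier i, of t] by (auto simp: sg_def t_def unit_vec_def)
  qed simp
  then have "unit_vec N s \<in> ks Am Bm N" using ks_smult[OF Am_carrier Bm_carrier Jt] by simp
  then show ?thesis unfolding controllable_sub_def using ks_ctrb[OF Am_carrier Bm_carrier] by auto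
qed

end

context core begin

lemma core_result:
  "(\<forall>i<N. blk n k l i \<in> {0,3} \<longrightarrow>
         unit_vec N i \<in> controllable_sub N Am Bm \<and> unit_vec N i \<in> observable_sub N Am C) \<and>
     (\<forall>i<N. blk n k l i = 4 \<longrightarrow>
         unit_vec N i \<in> controllable_sub N Am Bm \<and> unit_vec N i \<in> unobservable_sub N Am C) \<and>
     (\<forall>i<N. blk n k l i = 1 \<longrightarrow>
         unit_vec N i \<in> uncontrollable_sub N Am Bm \<and> unit_vec N i \<in> observable_sub N Am C) \<and>
     (\<forall>i<N. blk n k l i \<in> {2,5} \<longrightarrow>
         unit_vec N i \<in> uncontrollable_sub N Am Bm \<and> unit_vec N i \<in> unobservable_sub N Am C) \<and>
     (\<forall>i<N. \<forall>j<N. Ahat_zero (blk n k l i) (blk n k l j) \<longrightarrow> Am $$ (i,j) = 0) \<and>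
     (\<forall>i<N. \<forall>j<p. Bhat_zero (blk n k l i) \<longrightarrow> Bm $$ (i,j) = 0) \<and>
     (\<forall>i<p. \<forall>j<N. Chat_zero (blk n k l j) \<longrightarrow> C $$ (i,j) = 0)"
  using contr_unit obs_unit unobs_unit uncontr_unit Am_zero Bm_zero C_zero
  unfolding Bhat_zero_def Chat_zero_def by auto

end

lemma pow_conj:
  assumes H: "H \<in> carrier_mat N N" and V: "V \<in> carrier_mat N N" and W: "W \<in> carrier_mat N N"
    and WV: "W * V = 1\<^sub>m N"
  shows "W * (V * H * W) ^\<^sub>m j = H ^\<^sub>m j * W"
proof (induct j)
  case 0 then show ?case using W V H by simp
next
  case (Suc j)
  have VHW: "V * H * W \<in> carrier_mat N N" using V H W by auto
  have "W * (V * H * W) ^\<^sub>m Suc j = (W * (V * H * W) ^\<^sub>m j) * (V * H * W)"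
    by (simp, rule assoc_mult_mat[symmetric, OF W pow_carrier_mat[OF VHW] VHW])
  also have "\<dots> = H ^\<^sub>m j * W * (V * H * W)" using Suc by simp
  also have "\<dots> = H ^\<^sub>m j * ((W * V) * H * W)"
    using H V W by (simp add: assoc_d)
  also have "\<dots> = H ^\<^sub>m Suc j * W" using WV H W by (simp add: assoc_d)
  finally show ?case .
qed

lemma obsv_transform:
  assumes C: "C \<in> carrier_mat p N" and H: "H \<in> carrier_mat N N" and V: "V \<in> carrier_mat N N"
    and W: "W \<in> carrier_mat N N" and WV: "W * V = 1\<^sub>m N"
  shows "obsv_mat (C * W) (V * H * W) M = obsv_mat C H M * W"
proof (rule eq_matI)
  have Od: "obsv_mat C H M \<in> carrier_mat (M * p) N" using C by (intro carrier_matI) auto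
  fix r c assume r: "r < dim_row (obsv_mat C H M * W)" and c: "c < dim_col (obsv_mat C H M * W)"
  then have r': "r < M * p" and c': "c < N" using C W by auto
  have p: "p > 0" using r' by (cases p) auto
  have VHW: "V * H * W \<in> carrier_mat N N" using V H W by auto
  have eq: "(C * W) * (V * H * W) ^\<^sub>m (r div p) = (C * H ^\<^sub>m (r div p)) * W"
  proof -
    have "(C * W) * (V * H * W) ^\<^sub>m (r div p) = C * (W * (V * H * W) ^\<^sub>m (r div p))"
      by (rule assoc_mult_mat[OF C W pow_carrier_mat[OF VHW]])
    also have "\<dots> = C * (H ^\<^sub>m (r div p) * W)" using pow_conj[OF H V W WV] by simp
    also have "\<dots> = (C * H ^\<^sub>m (r div p)) * W"
      by (rule assoc_mult_mat[symmetric, OF C pow_carrier_mat[OF H] W])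
    finally show ?thesis .
  qed
  have "obsv_mat (C * W) (V * H * W) M $$ (r,c) = ((C * W) * (V * H * W) ^\<^sub>m (r div p)) $$ (r mod p, c)"
    using r' c' C W by (simp add: obsv_mat_def)
  also have "\<dots> = ((C * H ^\<^sub>m (r div p)) * W) $$ (r mod p, c)" unfolding eq ..
  also have "\<dots> = (\<Sum>t<N. (C * H ^\<^sub>m (r div p)) $$ (r mod p, t) * W $$ (t, c))"
    using p by (intro mult_index[OF mult_carrier_mat[OF C pow_carrier_mat[OF H]] W _ c']) simp
  also have "\<dots> = (\<Sum>t<N. obsv_mat C H M $$ (r, t) * W $$ (t, c))"
    using r' C by (intro sum.cong refl) (simp add: obsv_mat_def)
  also have "\<dots> = (obsv_mat C H M * W) $$ (r,c)"
    by (rule mult_index[symmetric, OF Od W r' c'])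
  finally show "obsv_mat (C * W) (V * H * W) M $$ (r,c) = (obsv_mat C H M * W) $$ (r,c)" .
qed (use C W in auto)

theorem corollary1:
  fixes n m k l :: nat
    and R C \<Sigma> Q Z X Y :: "real mat"
    and \<xi> a b c :: "nat \<Rightarrow> real"
  assumes "n \<ge> 1" and "m \<ge> 1"
    and "R \<in> carrier_mat (2*n) (2*n)" and "transpose_mat R = R"
    and "C \<in> carrier_mat (2*m) (2*n)"
    and "symplectic m \<Sigma>"
    and "k + l \<le> n"
    and "Q \<in> carrier_mat (4*n*m) (4*n*m)"
    and "Q * transpose_mat Q = 1\<^sub>m (4*n*m)" and "transpose_mat Q * Q = 1\<^sub>m (4*n*m)"
    and "symplectic n Z"
    and "\<forall>i<k. \<xi> i > 0"
    and "obsv_mat C (Jmat n * R) (2*n) = Q * blockE (4*n*m) n k l \<xi> (\<lambda>_. 1) \<xi> * minv Z"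
    and "X \<in> carrier_mat (4*n*m) (4*n*m)" and "invertible_mat X"
    and "symplectic n Y"
    and "\<forall>i<k. a i \<noteq> 0" and "\<forall>i<l. b i \<noteq> 0" and "\<forall>i<k. c i \<noteq> 0"
    and "X * blockE (4*n*m) n k l \<xi> (\<lambda>_. 1) \<xi> * Y = blockE (4*n*m) n k l a b c"
  shows "kalman_like_form n k l
           (Jmat n * R - (1/2) \<cdot>\<^sub>m (sharp C * C))
           (- (sharp C * \<Sigma>))
           C
           (minv Y * minv Z)"
proof -
  note n1 = assms(1) and m1 = assms(2) and R = assms(3) and Rsym = assms(4) and C = assms(5) and Cc = assms(5)
    and Sg = assms(6) and kl = assms(7) and Q = assms(8) and QQ = assms(9) assms(10)
    and Z = assms(11) and O = assms(13) and X = assms(14) assms(15) and Y = assms(16)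
    and an = assms(17) and bn = assms(18) and cn = assms(19) and XEY = assms(20)
  let ?N = "2*n" and ?Nr = "4*n*m"
  let ?Ez = "blockE ?Nr n k l \<xi> (\<lambda>_. 1) \<xi>"
  let ?E = "blockE ?Nr n k l a b c"
  have Yc: "Y \<in> carrier_mat ?N ?N" and Zc: "Z \<in> carrier_mat ?N ?N" using Y Z unfolding symplectic_def by auto
  have Sgc: "\<Sigma> \<in> carrier_mat (2*m) (2*m)" and SgS: "\<Sigma> * sharp \<Sigma> = 1\<^sub>m (2*m)" using Sg unfolding symplectic_def by auto
  define W where "W = Z * Y"
  define V where "V = minv Y * minv Z"
  have Wc: "W \<in> carrier_mat ?N ?N" unfolding W_def using Yc Zc by auto
  have Vsh: "V = sharp W" unfolding V_def W_def by (rule symp_prod(1)[OF Y Z])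
  have Vs: "symplectic n V" unfolding V_def by (rule symp_prod(2)[OF Y Z])
  have Vinv: "minv V = W" unfolding V_def W_def by (rule symp_prod(3)[OF Y Z])
  have WV: "W * V = 1\<^sub>m ?N" unfolding V_def W_def by (rule symp_prod(5)[OF Y Z])
  have Vc: "V \<in> carrier_mat ?N ?N" using Vs unfolding symplectic_def by auto
  have E0c: "?Ez \<in> carrier_mat ?Nr ?N" by (simp add: blockE_def)
  have Ec: "?E \<in> carrier_mat ?Nr ?N" by (simp add: blockE_def)
  have Xi: "minv X \<in> carrier_mat ?Nr ?Nr" "X * minv X = 1\<^sub>m ?Nr" "minv X * X = 1\<^sub>m ?Nr"
    using minv_props[OF X] by auto
  define Rh where "Rh = transpose_mat W * R * W"
  define Ch where "Ch = C * W"
  define P where "P = Q * minv X"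
  define L where "L = X * transpose_mat Q"
  have JR: "Jmat n * R \<in> carrier_mat ?N ?N" by (rule mult_carrier_mat[OF Jmat_carrier R])
  have WT: "transpose_mat W \<in> carrier_mat ?N ?N" using Wc by simp
  have Rhc: "Rh \<in> carrier_mat ?N ?N" unfolding Rh_def using WT R Wc by auto
  have Chc: "Ch \<in> carrier_mat (2*m) ?N" unfolding Ch_def using C Wc by auto
  have eJR: "Jmat n * Rh = V * (Jmat n * R) * W"
  proof -
    have "V * (Jmat n * R) = - (Jmat n * transpose_mat W * Jmat n) * (Jmat n * R)"
      unfolding Vsh sharp_eq[OF Wc] ..
    also have "\<dots> = - ((Jmat n * transpose_mat W) * (Jmat n * (Jmat n * R)))"
      using WT R by (simp add: assoc_d)
    also have "Jmat n * (Jmat n * R) = - R" using R by (intro JJ') simp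
    also have "- ((Jmat n * transpose_mat W) * (- R)) = (Jmat n * transpose_mat W) * R"
      using WT R by simp
    finally have "V * (Jmat n * R) * W = (Jmat n * transpose_mat W) * R * W" by simp
    also have "\<dots> = Jmat n * Rh" unfolding Rh_def using WT R Wc by (simp add: assoc_d)
    finally show ?thesis by simp
  qed
  have eO: "obsv_mat Ch (Jmat n * Rh) (2*n) = P * ?E"
  proof -
    have "obsv_mat Ch (Jmat n * Rh) (2*n) = obsv_mat C (Jmat n * R) (2*n) * W"
      unfolding eJR Ch_def by (rule obsv_transform[OF C JR Vc Wc WV])
    also have "\<dots> = (Q * ?Ez * minv Z) * (Z * Y)" unfolding O W_def ..
    also have "\<dots> = (Q * ?Ez) * (minv Z * (Z * Y))"
      using Q E0c Zc Yc symplectic_minv[OF Z] by (intro assoc_d) auto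
    also have "minv Z * (Z * Y) = Y"
    proof -
      have "minv Z * (Z * Y) = (minv Z * Z) * Y"
        using Zc Yc symplectic_minv[OF Z] by (intro assoc_d[symmetric]) auto
      also have "minv Z * Z = 1\<^sub>m ?N" using Z symplectic_minv[OF Z] unfolding symplectic_def by auto
      finally show ?thesis using Yc by simp
    qed
    also have "(Q * ?Ez) * Y = Q * (?Ez * Y)" using Q E0c Yc by (intro assoc_d) auto
    also have "?Ez * Y = minv X * (X * ?Ez * Y)"
    proof -
      have "minv X * (X * ?Ez * Y) = minv X * (X * (?Ez * Y))"
        using X E0c Yc by (simp add: assoc_d)
      also have "\<dots> = (minv X * X) * (?Ez * Y)"
        using X Xi E0c Yc by (intro assoc_d[symmetric]) auto
      finally show ?thesis using Xi E0c Yc by simp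
    qed
    also have "Q * (minv X * (X * ?Ez * Y)) = P * ?E"
      unfolding XEY P_def using Q Xi Ec by (intro assoc_d[symmetric]) auto
    finally show ?thesis .
  qed
  have LP: "L * P = 1\<^sub>m ?Nr"
  proof -
    have "L * P = X * ((transpose_mat Q * Q) * minv X)"
      unfolding L_def P_def using X Q Xi by (simp add: assoc_d)
    also have "\<dots> = 1\<^sub>m ?Nr" using QQ Xi by simp
    finally show ?thesis .
  qed
  have Rhsym: "transpose_mat Rh = Rh"
  proof -
    have "transpose_mat Rh = transpose_mat W * transpose_mat (transpose_mat W * R)"
      unfolding Rh_def by (rule transpose_mult[OF mult_carrier_mat[OF WT R] Wc])
    also have "transpose_mat (transpose_mat W * R) = transpose_mat R * W"
      using transpose_mult[OF WT R] by simp
    finally show ?thesis unfolding Rh_def Rsym using WT R Wc by (simp add: assoc_d)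
  qed
  have Pc: "P \<in> carrier_mat ?Nr ?Nr" unfolding P_def using Q Xi by auto
  have Lc: "L \<in> carrier_mat ?Nr ?Nr" unfolding L_def using Q X by auto
  interpret core n m k l Rh Ch \<Sigma> P L a b c
    using n1 m1 Rhc Rhsym Chc Sgc SgS kl Pc Lc LP eO an bn cn by unfold_locales auto
  have sCh: "sharp Ch = V * sharp C" unfolding Ch_def Vsh by (rule sharp_mult[OF Cc Wc])
  have sC: "sharp C \<in> carrier_mat ?N (2*m)" using Cc by simp
  have eqA: "V * (Jmat n * R - (1/2) \<cdot>\<^sub>m (sharp C * C)) * minv V = Am"
  proof -
    have SC: "sharp C * C \<in> carrier_mat ?N ?N" by (rule mult_carrier_mat[OF sC Cc])
    have "V * (Jmat n * R - (1/2) \<cdot>\<^sub>m (sharp C * C)) = V * (Jmat n * R) - V * ((1/2) \<cdot>\<^sub>m (sharp C * C))"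
      by (rule mult_minus_distrib_mat[OF Vc JR smult_carrier_mat[OF SC]])
    also have "V * ((1/2) \<cdot>\<^sub>m (sharp C * C)) = (1/2) \<cdot>\<^sub>m (V * (sharp C * C))"
      by (rule mult_smult_distrib[OF Vc SC])
    finally have "V * (Jmat n * R - (1/2) \<cdot>\<^sub>m (sharp C * C)) * W =
       (V * (Jmat n * R) - (1/2) \<cdot>\<^sub>m (V * (sharp C * C))) * W" by simp
    also have "\<dots> = V * (Jmat n * R) * W - ((1/2) \<cdot>\<^sub>m (V * (sharp C * C))) * W"
      by (rule minus_mult_distrib_mat[OF mult_carrier_mat[OF Vc JR] smult_carrier_mat[OF mult_carrier_mat[OF Vc SC]] Wc])
    also have "((1/2) \<cdot>\<^sub>m (V * (sharp C * C))) * W = (1/2) \<cdot>\<^sub>m (V * (sharp C * C) * W)"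
      by (rule mult_smult_assoc_mat[OF mult_carrier_mat[OF Vc SC] Wc])
    also have "V * (sharp C * C) * W = sharp Ch * Ch"
    proof -
      have "sharp Ch * Ch = (V * sharp C) * (C * W)" using sCh unfolding Ch_def by simp
      also have "\<dots> = V * (sharp C * C) * W" using Vc sC Cc Wc by (simp add: assoc_d)
      finally show ?thesis by simp
    qed
    also have "V * (Jmat n * R) * W = Jmat n * Rh" using eJR by simp
    finally show ?thesis unfolding Vinv Am_def H_def S_def .
  qed
  have eqB: "V * (- (sharp C * \<Sigma>)) = Bm"
  proof -
    have "V * (- (sharp C * \<Sigma>)) = - (V * (sharp C * \<Sigma>))" using Vc sC Sgc by simp
    also have "V * (sharp C * \<Sigma>) = sharp Ch * \<Sigma>" unfolding sCh using Vc sC Sgc by (simp add: assoc_d)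
    finally show ?thesis unfolding Bm_def S_def .
  qed
  have eqC: "C * minv V = Ch" unfolding Vinv Ch_def ..
  have dB: "dim_col (- (sharp C * \<Sigma>)) = 2*m" using Sgc by simp
  have dC: "dim_row C = 2*m" using Cc by simp
  show ?thesis
    unfolding kalman_like_form_def Let_def V_def[symmetric] eqA eqB eqC dB dC
    using Vs core_result by simp
qed

end
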